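(* Let $\imath:V\hookrightarrow U$ be an inclusion of regular molecules with $\dim V=\dim U=1$. Then $\imath$ is a submolecule inclusion.
   Context: All posets are finite; $y$ covers $x$ if $x<y$ with nothing strictly between. A finite poset is graded if for each $x$ all maximal covering chains descending from $x$ have the same length $\dim x$; $U_n$ denotes elements of dimension $n$. An oriented graded poset is a finite graded poset with a label $\pm$ on each covering pair; $\Delta^\alpha x$ ($\nabla^\alpha x$) is the set of elements covered by (covering) $x$ with label $\alpha$. For closed (downward closed) $U$, with $\mathrm{cl}$ downward closure, $\max U$ maximal elements, $\dim U$ maximal dimension: $\Delta^\alpha_nU=\{x\in U_n:\nabla^{-\alpha}x\cap U=\emptyset\}$, $\partial^\alpha_nU=\mathrm{cl}(\Delta^\alpha_nU)\cup\bigcup_{k<n}\mathrm{cl}((\max U)_k)$ ($\emptyset$ for $n<0$), $\partial_nU=\partial^-_nU\cup\partial^+_nU$, subscript omitted for $n=\dim U-1$. Maps are functions with $f(\partial^\alpha_n\mathrm{cl}\{x\})=\partial^\alpha_n\mathrm{cl}\{f(x)\}$; inclusions are injective maps. $U\#_kV$ is the pushout of $U\hookleftarrow\partial^+_kU\cong\partial^-_kV\hookrightarrow V$; for $U,V$ of equal dimension $n$ with $\partial U\cong\partial V$ compatibly with $\partial^\pm$, $U\Rightarrow V$ is that pushout with a new element $\top$ of dimension $n+1$, $\Delta^-\top=U_n$, $\Delta^+\top=V_n$. $U$ is round if $\partial^-_nU\cap\partial^+_nU=\partial_{n-1}U$ for all $n<\dim U$. Regular molecules: smallest isomorphism-closed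 class containing the point, closed under $U\#_kV$ ($k<\min(\dim U,\dim V)$) and $U\Rightarrow V$ for round regular molecules of equal dimension. Submolecule inclusions: smallest class of inclusions of regular molecules containing all isomorphisms and the inclusions $U\hookrightarrow U\#_kV\hookleftarrow V$, closed under composition. *)

theory Defs
  imports Main
begin

text \<open>An oriented graded poset is given by a carrier set and, for each sign
(True = +, False = -) and element x, the set faces P a x = Delta^a x of
elements covered by x with label a.\<close>

record 'a ogp =
  elems :: "'a set"
  faces :: "bool \<Rightarrow> 'a \<Rightarrow> 'a set"

definition covers :: "'a ogp \<Rightarrow> 'a \<Rightarrow> 'a \<Rightarrow> bool" where
  "covers P x y \<longleftrightarrow> x \<in> faces P True y \<union> faces P False y"

definition strict_less :: "'a ogp \<Rightarrow> ('a \<times> 'a) set" where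
  "strict_less P = {(x, y). covers P x y}\<^sup>+"

definition le :: "'a ogp \<Rightarrow> 'a \<Rightarrow> 'a \<Rightarrow> bool" where
  "le P x y \<longleftrightarrow> x \<in> elems P \<and> y \<in> elems P \<and> (x = y \<or> (x, y) \<in> strict_less P)"

definition maxchain :: "'a ogp \<Rightarrow> 'a \<Rightarrow> 'a list \<Rightarrow> bool" where
  "maxchain P x cs \<longleftrightarrow> cs \<noteq> [] \<and> hd cs = x \<and>
     (\<forall>i. Suc i < length cs \<longrightarrow> covers P (cs ! Suc i) (cs ! i)) \<and>
     (\<forall>z. \<not> covers P z (last cs))"

definition graded :: "'a ogp \<Rightarrow> bool" where
  "graded P \<longleftrightarrow> (\<forall>x\<in>elems P. \<forall>cs ds. maxchain P x cs \<longrightarrow> maxchain P x ds \<longrightarrow>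
                       length cs = length ds)"

definition ogpos :: "'a ogp \<Rightarrow> bool" where
  "ogpos P \<longleftrightarrow> finite (elems P) \<and>
     (\<forall>a x. faces P a x \<subseteq> elems P) \<and>
     (\<forall>a x. x \<notin> elems P \<longrightarrow> faces P a x = {}) \<and>
     (\<forall>x. faces P True x \<inter> faces P False x = {}) \<and>
     (\<forall>x. (x, x) \<notin> strict_less P) \<and>
     (\<forall>x y z. covers P x y \<longrightarrow> \<not> ((x, z) \<in> strict_less P \<and> (z, y) \<in> strict_less P)) \<and>
     graded P"

definition elem_dim :: "'a ogp \<Rightarrow> 'a \<Rightarrow> nat" where
  "elem_dim P x = (SOME n. \<exists>cs. maxchain P x cs \<and> length cs = Suc n)"

definition set_dim :: "'a ogp \<Rightarrow> 'a set \<Rightarrow> int" where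
  "set_dim P S = Max (insert (-1) ((\<lambda>x. int (elem_dim P x)) ` S))"

definition cl :: "'a ogp \<Rightarrow> 'a set \<Rightarrow> 'a set" where
  "cl P S = {x \<in> elems P. \<exists>y\<in>S. le P x y}"

definition cofaces :: "'a ogp \<Rightarrow> bool \<Rightarrow> 'a \<Rightarrow> 'a set" where
  "cofaces P a x = {y \<in> elems P. x \<in> faces P a y}"

definition maxel :: "'a ogp \<Rightarrow> 'a set \<Rightarrow> 'a set" where
  "maxel P S = {x \<in> S. \<forall>y\<in>S. le P x y \<longrightarrow> y = x}"

definition Delta_n :: "'a ogp \<Rightarrow> bool \<Rightarrow> int \<Rightarrow> 'a set \<Rightarrow> 'a set" where
  "Delta_n P a n U = {x \<in> U. int (elem_dim P x) = n \<and> cofaces P (\<not> a) x \<inter> U = {}}"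

definition bdm :: "'a ogp \<Rightarrow> bool \<Rightarrow> int \<Rightarrow> 'a set \<Rightarrow> 'a set" where
  "bdm P a n U = (if n < 0 then {} else
      cl P (Delta_n P a n U) \<union> (\<Union>x\<in>{x \<in> maxel P U. int (elem_dim P x) < n}. cl P {x}))"

definition bdn :: "'a ogp \<Rightarrow> int \<Rightarrow> 'a set \<Rightarrow> 'a set" where
  "bdn P n U = bdm P False n U \<union> bdm P True n U"

definition ogp_dim :: "'a ogp \<Rightarrow> int" where
  "ogp_dim P = set_dim P (elems P)"

definition bd :: "'a ogp \<Rightarrow> bool \<Rightarrow> 'a set" where
  "bd P a = bdm P a (ogp_dim P - 1) (elems P)"

definition bd_all :: "'a ogp \<Rightarrow> 'a set" where
  "bd_all P = bdn P (ogp_dim P - 1) (elems P)"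

definition restrict_ogp :: "'a ogp \<Rightarrow> 'a set \<Rightarrow> 'a ogp" where
  "restrict_ogp P S = \<lparr>elems = S, faces = (\<lambda>a x. if x \<in> S then faces P a x \<inter> S else {})\<rparr>"

definition round :: "'a ogp \<Rightarrow> bool" where
  "round P \<longleftrightarrow> (\<forall>n::int. n < ogp_dim P \<longrightarrow>
      bdm P False n (elems P) \<inter> bdm P True n (elems P) = bdn P (n - 1) (elems P))"

definition is_map :: "('a \<Rightarrow> 'b) \<Rightarrow> 'a ogp \<Rightarrow> 'b ogp \<Rightarrow> bool" where
  "is_map f P Q \<longleftrightarrow> (\<forall>x\<in>elems P. f x \<in> elems Q) \<and>
     (\<forall>x\<in>elems P. \<forall>a n. f ` bdm P a n (cl P {x}) = bdm Q a n (cl Q {f x}))"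

definition inclusion :: "('a \<Rightarrow> 'b) \<Rightarrow> 'a ogp \<Rightarrow> 'b ogp \<Rightarrow> bool" where
  "inclusion f P Q \<longleftrightarrow> ogpos P \<and> ogpos Q \<and> is_map f P Q \<and> inj_on f (elems P)"

definition iso :: "('a \<Rightarrow> 'b) \<Rightarrow> 'a ogp \<Rightarrow> 'b ogp \<Rightarrow> bool" where
  "iso f P Q \<longleftrightarrow> bij_betw f (elems P) (elems Q) \<and>
     (\<forall>x\<in>elems P. \<forall>a. f ` faces P a x = faces Q a (f x))"

datatype elt = Pt | Lf elt | Rt elt | Top

definition point_ogp :: "elt ogp" where
  "point_ogp = \<lparr>elems = {Pt}, faces = (\<lambda>a x. {})\<rparr>"

text \<open>Gluing Q onto P along a closed S in Q, identified with a subset of P via phi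
(pushout P <- S -> Q).\<close>
definition glue_inr :: "elt set \<Rightarrow> (elt \<Rightarrow> elt) \<Rightarrow> elt \<Rightarrow> elt" where
  "glue_inr S phi y = (if y \<in> S then Lf (phi y) else Rt y)"

definition glue_faces :: "elt ogp \<Rightarrow> elt ogp \<Rightarrow> elt set \<Rightarrow> (elt \<Rightarrow> elt) \<Rightarrow> bool \<Rightarrow> elt \<Rightarrow> elt set" where
  "glue_faces P Q S phi a e = (case e of
       Lf x \<Rightarrow> (if x \<in> elems P then Lf ` faces P a x else {})
     | Rt y \<Rightarrow> (if y \<in> elems Q - S then glue_inr S phi ` faces Q a y else {})
     | _ \<Rightarrow> {})"

definition glue :: "elt ogp \<Rightarrow> elt ogp \<Rightarrow> elt set \<Rightarrow> (elt \<Rightarrow> elt) \<Rightarrow> elt ogp" where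
  "glue P Q S phi = \<lparr>elems = Lf ` elems P \<union> Rt ` (elems Q - S),
                     faces = glue_faces P Q S phi\<rparr>"

definition paste :: "nat \<Rightarrow> elt ogp \<Rightarrow> elt ogp \<Rightarrow> (elt \<Rightarrow> elt) \<Rightarrow> elt ogp" where
  "paste k P Q phi = glue P Q (bdm Q False (int k) (elems Q)) phi"

definition paste_inr :: "nat \<Rightarrow> elt ogp \<Rightarrow> (elt \<Rightarrow> elt) \<Rightarrow> elt \<Rightarrow> elt" where
  "paste_inr k Q phi = glue_inr (bdm Q False (int k) (elems Q)) phi"

definition paste_ok :: "nat \<Rightarrow> elt ogp \<Rightarrow> elt ogp \<Rightarrow> (elt \<Rightarrow> elt) \<Rightarrow> bool" where
  "paste_ok k P Q phi \<longleftrightarrow> int k < ogp_dim P \<and> int k < ogp_dim Q \<and>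
     iso phi (restrict_ogp Q (bdm Q False (int k) (elems Q)))
             (restrict_ogp P (bdm P True (int k) (elems P)))"

definition arrow :: "elt ogp \<Rightarrow> elt ogp \<Rightarrow> (elt \<Rightarrow> elt) \<Rightarrow> elt ogp" where
  "arrow P Q phi = \<lparr>elems = insert Top (elems (glue P Q (bd_all Q) phi)),
     faces = (\<lambda>a e. if e = Top then
                (if a then glue_inr (bd_all Q) phi ` {y \<in> elems Q. int (elem_dim Q y) = ogp_dim Q}
                 else Lf ` {x \<in> elems P. int (elem_dim P x) = ogp_dim P})
              else glue_faces P Q (bd_all Q) phi a e)\<rparr>"

definition arrow_ok :: "elt ogp \<Rightarrow> elt ogp \<Rightarrow> (elt \<Rightarrow> elt) \<Rightarrow> bool" where
  "arrow_ok P Q phi \<longleftrightarrow> round P \<and> round Q \<and> ogp_dim P = ogp_dim Q \<and>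
     iso phi (restrict_ogp Q (bd_all Q)) (restrict_ogp P (bd_all P)) \<and>
     (\<forall>a. phi ` bd Q a = bd P a)"

inductive regmolE :: "elt ogp \<Rightarrow> bool" where
  point: "regmolE point_ogp"
| iso: "regmolE P \<Longrightarrow> ogpos Q \<Longrightarrow> iso f P Q \<Longrightarrow> regmolE Q"
| paste: "regmolE P \<Longrightarrow> regmolE Q \<Longrightarrow> paste_ok k P Q phi \<Longrightarrow> regmolE (paste k P Q phi)"
| arrow: "regmolE P \<Longrightarrow> regmolE Q \<Longrightarrow> arrow_ok P Q phi \<Longrightarrow> regmolE (arrow P Q phi)"

inductive subincE :: "(elt \<Rightarrow> elt) \<Rightarrow> elt ogp \<Rightarrow> elt ogp \<Rightarrow> bool" where
  iso: "regmolE P \<Longrightarrow> regmolE Q \<Longrightarrow> iso f P Q \<Longrightarrow> subincE f P Q"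
| inl: "regmolE P \<Longrightarrow> regmolE Q \<Longrightarrow> paste_ok k P Q phi \<Longrightarrow> subincE Lf P (paste k P Q phi)"
| inr: "regmolE P \<Longrightarrow> regmolE Q \<Longrightarrow> paste_ok k P Q phi \<Longrightarrow>
          subincE (paste_inr k Q phi) Q (paste k P Q phi)"
| comp: "subincE f P Q \<Longrightarrow> subincE g Q R \<Longrightarrow> subincE (g \<circ> f) P R"

definition regular_molecule :: "'a ogp \<Rightarrow> bool" where
  "regular_molecule U \<longleftrightarrow> ogpos U \<and> (\<exists>P f. regmolE P \<and> iso f P U)"

definition submolecule_inclusion :: "('a \<Rightarrow> 'b) \<Rightarrow> 'a ogp \<Rightarrow> 'b ogp \<Rightarrow> bool" where
  "submolecule_inclusion i V U \<longleftrightarrow> inclusion i V U \<and>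
     (\<exists>V' U' a b g. subincE g V' U' \<and> iso a V V' \<and> iso b U U' \<and>
        (\<forall>x\<in>elems V. b (i x) = g (a x)))"

end

theory Submission
  imports Defs
begin

definition basic :: "'a ogp \<Rightarrow> bool" where
  "basic P \<longleftrightarrow> finite (elems P) \<and> (\<forall>a x. faces P a x \<subseteq> elems P) \<and>
     (\<forall>a x. x \<notin> elems P \<longrightarrow> faces P a x = {}) \<and>
     (\<forall>x. faces P True x \<inter> faces P False x = {})"

definition rankfn :: "'a ogp \<Rightarrow> ('a \<Rightarrow> nat) \<Rightarrow> bool" where
  "rankfn P d \<longleftrightarrow> (\<forall>x\<in>elems P. \<forall>z. covers P z x \<longrightarrow> d x = Suc (d z)) \<and>
     (\<forall>x\<in>elems P. (\<forall>z. \<not> covers P z x) \<longrightarrow> d x = 0)"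

lemma ogpos_basic: "ogpos P \<Longrightarrow> basic P"
  unfolding ogpos_def basic_def by blast

lemma covers_elems: "basic P \<Longrightarrow> covers P x y \<Longrightarrow> x \<in> elems P \<and> y \<in> elems P"
  unfolding basic_def covers_def by (metis UnE empty_iff subsetD)

lemma covers_rank: "basic P \<Longrightarrow> rankfn P d \<Longrightarrow> covers P x y \<Longrightarrow> d y = Suc (d x)"
  using covers_elems unfolding rankfn_def by metis

lemma strict_less_rank:
  assumes "basic P" "rankfn P d" "(x, y) \<in> strict_less P"
  shows "x \<in> elems P \<and> y \<in> elems P \<and> d x < d y"
  using assms(3) unfolding strict_less_def
proof (induction rule: trancl_induct)
  case (base y) then show ?case using covers_elems[OF assms(1)] covers_rank[OF assms(1,2)] by force
next
  case (step y z) then show ?case using covers_elems[OF assms(1)] covers_rank[OF assms(1,2)] by force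
qed

lemma all_nat_split: "(\<forall>i::nat. Q i) \<longleftrightarrow> Q 0 \<and> (\<forall>i. Q (Suc i))"
  by (metis not0_implies_Suc)

lemma maxchain_single: "maxchain P x [x] \<longleftrightarrow> (\<forall>z. \<not> covers P z x)"
  unfolding maxchain_def by auto

lemma maxchain_cons2: "maxchain P x (x # y # rest) \<longleftrightarrow> covers P y x \<and> maxchain P y (y # rest)"
proof -
  have "(\<forall>i. Suc i < length (x # y # rest) \<longrightarrow> covers P ((x # y # rest) ! Suc i) ((x # y # rest) ! i))
    \<longleftrightarrow> covers P y x \<and> (\<forall>i. Suc i < length (y # rest) \<longrightarrow> covers P ((y # rest) ! Suc i) ((y # rest) ! i))"
    by (subst all_nat_split) auto
  then show ?thesis unfolding maxchain_def by auto
qed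

lemma maxchain_length:
  assumes "basic P" "rankfn P d"
  shows "maxchain P x cs \<Longrightarrow> x \<in> elems P \<Longrightarrow> length cs = Suc (d x)"
proof (induction cs arbitrary: x)
  case Nil then show ?case by (simp add: maxchain_def)
next
  case (Cons c cs)
  then have cx: "c = x" by (simp add: maxchain_def)
  show ?case
  proof (cases cs)
    case Nil
    then have "\<forall>z. \<not> covers P z x" using Cons.prems cx maxchain_single by metis
    then have "d x = 0" using assms(2) Cons.prems(2) unfolding rankfn_def by blast
    then show ?thesis using Nil by simp
  next
    case (Cons y rest)
    then have "covers P y x" "maxchain P y (y # rest)" using Cons.prems cx maxchain_cons2 by metis+
    moreover have "y \<in> elems P" using covers_elems[OF assms(1) \<open>covers P y x\<close>] by blast
    ultimately have "length cs = Suc (d y)" using Cons.IH Cons by simp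
    moreover have "d x = Suc (d y)" using covers_rank[OF assms \<open>covers P y x\<close>] .
    ultimately show ?thesis by simp
  qed
qed

lemma maxchain_exists:
  assumes "basic P" "rankfn P d"
  shows "x \<in> elems P \<Longrightarrow> \<exists>cs. maxchain P x cs \<and> length cs = Suc (d x)"
proof (induction "d x" arbitrary: x)
  case 0
  then have "\<forall>z. \<not> covers P z x" using covers_rank[OF assms] by (metis nat.distinct(1))
  then show ?case using maxchain_single 0 by fastforce
next
  case (Suc n)
  have "\<exists>z. covers P z x" using assms(2) Suc.prems Suc.hyps(2) unfolding rankfn_def by force
  then obtain z where z: "covers P z x" by blast
  then have "d z = n" "z \<in> elems P" using covers_rank[OF assms z] Suc.hyps(2) covers_elems[OF assms(1) z] by auto
  then obtain cs where "maxchain P z cs" "length cs = Suc n" using Suc.hyps(1) by metis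
  then obtain rest where "cs = z # rest" unfolding maxchain_def by (cases cs) auto
  then have "maxchain P x (x # cs)" using maxchain_cons2 z \<open>maxchain P z cs\<close> by metis
  then show ?case using \<open>length cs = Suc n\<close> Suc.hyps(2) by auto
qed

lemma rank_elem_dim:
  assumes "basic P" "rankfn P d" "x \<in> elems P"
  shows "elem_dim P x = d x"
proof -
  obtain cs where cs: "maxchain P x cs" "length cs = Suc (d x)" using maxchain_exists[OF assms] by blast
  have "\<exists>cs. maxchain P x cs \<and> length cs = Suc (elem_dim P x)"
    unfolding elem_dim_def by (rule someI[where x="d x"]) (use cs in blast)
  then obtain ds where "maxchain P x ds" "length ds = Suc (elem_dim P x)" by blast
  then show ?thesis using maxchain_length[OF assms(1,2)] assms(3) by fastforce
qed

lemma rank_ogpos: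
  assumes "basic P" "rankfn P d"
  shows "ogpos P"
proof -
  have g: "graded P" unfolding graded_def using maxchain_length[OF assms] by metis
  have a: "\<forall>x. (x, x) \<notin> strict_less P" using strict_less_rank[OF assms] by blast
  have s: "\<forall>x y z. covers P x y \<longrightarrow> \<not> ((x, z) \<in> strict_less P \<and> (z, y) \<in> strict_less P)"
    using strict_less_rank[OF assms] covers_rank[OF assms] by (metis Suc_lessE less_irrefl_nat less_trans_Suc)
  show ?thesis using assms(1) g a s unfolding ogpos_def basic_def by blast
qed


lemma iso_bij: "iso f P Q \<Longrightarrow> bij_betw f (elems P) (elems Q)" unfolding iso_def by simp
lemma iso_faces: "iso f P Q \<Longrightarrow> x \<in> elems P \<Longrightarrow> f ` faces P a x = faces Q a (f x)"
  unfolding iso_def by simp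

lemma basic_faces: "basic P \<Longrightarrow> faces P a x \<subseteq> elems P" unfolding basic_def by simp
lemma basic_out: "basic P \<Longrightarrow> x \<notin> elems P \<Longrightarrow> faces P a x = {}" unfolding basic_def by simp
lemma basic_finite: "basic P \<Longrightarrow> finite (elems P)" unfolding basic_def by simp

lemma iso_inv:
  assumes "basic P" "iso f P Q"
  shows "iso (inv_into (elems P) f) Q P"
proof -
  have b: "bij_betw f (elems P) (elems Q)" using iso_bij[OF assms(2)] .
  have b2: "bij_betw (inv_into (elems P) f) (elems Q) (elems P)" using bij_betw_inv_into[OF b] .
  have "inv_into (elems P) f ` faces Q a y = faces P a (inv_into (elems P) f y)" if y: "y \<in> elems Q" for a y
  proof -
    define x where "x = inv_into (elems P) f y"
    have x: "x \<in> elems P" "f x = y" using y b unfolding x_def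
      by (metis bij_betw_imp_surj_on inv_into_into) (metis b bij_betw_inv_into_right y)
    have "faces Q a y = f ` faces P a x" using iso_faces[OF assms(2) x(1)] x(2) by simp
    moreover have "inv_into (elems P) f ` f ` faces P a x = faces P a x"
      using basic_faces[OF assms(1)] b bij_betw_def inv_into_image_cancel by metis
    ultimately show ?thesis unfolding x_def by simp
  qed
  then show ?thesis unfolding iso_def using b2 by blast
qed

lemma iso_inv_left: "iso f P Q \<Longrightarrow> x \<in> elems P \<Longrightarrow> inv_into (elems P) f (f x) = x"
  using iso_bij bij_betw_def inv_into_f_f by metis
lemma iso_inv_right: "iso f P Q \<Longrightarrow> y \<in> elems Q \<Longrightarrow> f (inv_into (elems P) f y) = y"
  using iso_bij bij_betw_inv_into_right by metis
lemma iso_inv_in: "iso f P Q \<Longrightarrow> y \<in> elems Q \<Longrightarrow> inv_into (elems P) f y \<in> elems P"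
  using iso_bij by (metis bij_betw_imp_surj_on inv_into_into)
lemma iso_in: "iso f P Q \<Longrightarrow> x \<in> elems P \<Longrightarrow> f x \<in> elems Q"
  using iso_bij bij_betw_apply by metis
lemma iso_inj: "iso f P Q \<Longrightarrow> x \<in> elems P \<Longrightarrow> y \<in> elems P \<Longrightarrow> f x = f y \<longleftrightarrow> x = y"
  using iso_bij by (metis bij_betw_def inj_on_def)

lemma iso_comp:
  assumes "iso f P Q" "iso g Q R"
  shows "iso (g \<circ> f) P R"
proof -
  have "bij_betw (g \<circ> f) (elems P) (elems R)" using iso_bij[OF assms(1)] iso_bij[OF assms(2)] bij_betw_trans by metis
  moreover have "(g \<circ> f) ` faces P a x = faces R a ((g \<circ> f) x)" if "x \<in> elems P" for a x
  proof -
    have "(g \<circ> f) ` faces P a x = g ` (f ` faces P a x)" by (simp add: image_comp)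
    then show ?thesis using iso_faces[OF assms(1) that] iso_faces[OF assms(2) iso_in[OF assms(1) that]] by simp
  qed
  ultimately show ?thesis unfolding iso_def by blast
qed

lemma iso_id: "iso id P P" unfolding iso_def by simp

lemma rank_iso:
  assumes "basic P" "rankfn P d" "iso f P Q"
  shows "rankfn Q (d \<circ> inv_into (elems P) f)"
proof -
  let ?g = "inv_into (elems P) f"
  have 1: "d (?g y) = Suc (d (?g z))" if y: "y \<in> elems Q" and c: "covers Q z y" for y z
  proof -
    have x: "?g y \<in> elems P" "f (?g y) = y" using iso_inv_in[OF assms(3) y] iso_inv_right[OF assms(3) y] .
    obtain a where "z \<in> faces Q a y" using c unfolding covers_def by auto
    then have "z \<in> f ` faces P a (?g y)" using iso_faces[OF assms(3) x(1), of a] x(2) by simp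
    then obtain z' where z': "z' \<in> faces P a (?g y)" "z = f z'" by blast
    have "z' \<in> elems P" using z'(1) basic_faces[OF assms(1)] by blast
    then have "?g z = z'" using iso_inv_left[OF assms(3)] z'(2) by simp
    moreover have "covers P z' (?g y)" using z'(1) unfolding covers_def by (cases a) auto
    ultimately show ?thesis using assms(2) x(1) unfolding rankfn_def by metis
  qed
  have 2: "d (?g y) = 0" if y: "y \<in> elems Q" and c: "\<forall>z. \<not> covers Q z y" for y
  proof -
    have x: "?g y \<in> elems P" "f (?g y) = y" using iso_inv_in[OF assms(3) y] iso_inv_right[OF assms(3) y] .
    have "faces Q a y = {}" for a using c unfolding covers_def by (cases a) auto
    then have "faces P a (?g y) = {}" for a using iso_faces[OF assms(3) x(1), of a] x(2) by simp
    then have "\<forall>z. \<not> covers P z (?g y)" unfolding covers_def by simp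
    then show ?thesis using assms(2) x(1) unfolding rankfn_def by metis
  qed
  show ?thesis unfolding rankfn_def using 1 2 by simp
qed

lemma iso_dim:
  assumes "basic P" "basic Q" "rankfn P d" "iso f P Q" "x \<in> elems P"
  shows "elem_dim Q (f x) = elem_dim P x"
proof -
  have "elem_dim Q (f x) = (d \<circ> inv_into (elems P) f) (f x)"
    using rank_elem_dim[OF assms(2) rank_iso[OF assms(1,3,4)] iso_in[OF assms(4,5)]] .
  also have "\<dots> = d x" using iso_inv_left[OF assms(4,5)] by simp
  also have "\<dots> = elem_dim P x" using rank_elem_dim[OF assms(1,3,5)] by simp
  finally show ?thesis .
qed

lemma iso_covers: "basic P \<Longrightarrow> iso f P Q \<Longrightarrow> covers P x y \<Longrightarrow> covers Q (f x) (f y)"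
proof -
  assume b: "basic P" and i: "iso f P Q" and c: "covers P x y"
  have y: "y \<in> elems P" using covers_elems[OF b c] by simp
  obtain a where "x \<in> faces P a y" using c unfolding covers_def by auto
  then have "f x \<in> faces Q a (f y)" using iso_faces[OF i y] by blast
  then show ?thesis unfolding covers_def by (cases a) auto
qed

lemma iso_strict:
  assumes "basic P" "iso f P Q" "(x, y) \<in> strict_less P"
  shows "(f x, f y) \<in> strict_less Q"
  using assms(3) unfolding strict_less_def
proof (induction rule: trancl_induct)
  case (base y) then show ?case using iso_covers[OF assms(1,2)] by auto
next
  case (step y z)
  then have "(f y, f z) \<in> {(x, y). covers Q x y}" using iso_covers[OF assms(1,2)] by auto
  then show ?case using step.IH by (meson trancl.trancl_into_trancl)
qed

lemma iso_le:
  assumes "basic P" "basic Q" "iso f P Q" "x \<in> elems P" "y \<in> elems P"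
  shows "le Q (f x) (f y) \<longleftrightarrow> le P x y"
proof
  assume "le P x y"
  then show "le Q (f x) (f y)" unfolding le_def using iso_strict[OF assms(1,3)] iso_in[OF assms(3)] by metis
next
  assume l: "le Q (f x) (f y)"
  have i2: "iso (inv_into (elems P) f) Q P" using iso_inv[OF assms(1,3)] .
  have "f x = f y \<or> (f x, f y) \<in> strict_less Q" using l unfolding le_def by simp
  then have "x = y \<or> (x, y) \<in> strict_less P"
    using iso_strict[OF assms(2) i2, of "f x" "f y"] iso_inv_left[OF assms(3)] assms(4,5) by metis
  then show "le P x y" unfolding le_def using assms(4,5) by simp
qed

lemma iso_cl:
  assumes "basic P" "basic Q" "iso f P Q" "S \<subseteq> elems P"
  shows "f ` cl P S = cl Q (f ` S)"
proof
  show "f ` cl P S \<subseteq> cl Q (f ` S)"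
  proof
    fix z assume "z \<in> f ` cl P S"
    then obtain x y where x: "z = f x" "x \<in> elems P" "y \<in> S" "le P x y" unfolding cl_def by blast
    then have "le Q (f x) (f y)" using iso_le[OF assms(1-3)] assms(4) by blast
    then show "z \<in> cl Q (f ` S)" unfolding cl_def using x iso_in[OF assms(3)] by blast
  qed
next
  show "cl Q (f ` S) \<subseteq> f ` cl P S"
  proof
    fix z assume "z \<in> cl Q (f ` S)"
    then obtain y where z: "z \<in> elems Q" "y \<in> S" "le Q z (f y)" unfolding cl_def by blast
    define x where "x = inv_into (elems P) f z"
    have x: "x \<in> elems P" "f x = z" using iso_inv_in[OF assms(3) z(1)] iso_inv_right[OF assms(3) z(1)] x_def by auto
    then have "le P x y" using iso_le[OF assms(1-3) x(1)] z assms(4) by blast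
    then show "z \<in> f ` cl P S" unfolding cl_def using x z by blast
  qed
qed

lemma iso_cofaces_empty:
  assumes "basic P" "basic Q" "iso f P Q" "S \<subseteq> elems P" "x \<in> elems P"
  shows "cofaces Q a (f x) \<inter> f ` S = {} \<longleftrightarrow> cofaces P a x \<inter> S = {}"
proof -
  have "f x \<in> faces Q a (f y) \<longleftrightarrow> x \<in> faces P a y" if "y \<in> S" for y
  proof -
    have y: "y \<in> elems P" using that assms(4) by blast
    have "f x \<in> faces Q a (f y) \<longleftrightarrow> f x \<in> f ` faces P a y" using iso_faces[OF assms(3) y] by simp
    also have "\<dots> \<longleftrightarrow> x \<in> faces P a y"
      using iso_inj[OF assms(3)] assms(5) basic_faces[OF assms(1)] by blast
    finally show ?thesis .
  qed
  then show ?thesis unfolding cofaces_def using assms(4) iso_in[OF assms(3)] by blast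
qed

lemma iso_Delta:
  assumes "basic P" "basic Q" "rankfn P d" "iso f P Q" "S \<subseteq> elems P"
  shows "f ` Delta_n P a n S = Delta_n Q a n (f ` S)"
proof -
  have "x \<in> Delta_n P a n S \<longleftrightarrow> f x \<in> Delta_n Q a n (f ` S)" if "x \<in> S" for x
  proof -
    have x: "x \<in> elems P" using that assms(5) by blast
    have "f x \<in> f ` S" using that by blast
    then show ?thesis unfolding Delta_n_def
      using that iso_dim[OF assms(1-4) x] iso_cofaces_empty[OF assms(1,2,4,5) x] by simp
  qed
  moreover have "Delta_n P a n S \<subseteq> S" "Delta_n Q a n (f ` S) \<subseteq> f ` S" unfolding Delta_n_def by auto
  ultimately show ?thesis by blast
qed

lemma iso_maxel:
  assumes "basic P" "basic Q" "iso f P Q" "S \<subseteq> elems P"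
  shows "f ` maxel P S = maxel Q (f ` S)"
proof -
  have "x \<in> maxel P S \<longleftrightarrow> f x \<in> maxel Q (f ` S)" if "x \<in> S" for x
  proof -
    have x: "x \<in> elems P" using that assms(4) by blast
    have "(\<forall>y\<in>S. le P x y \<longrightarrow> y = x) \<longleftrightarrow> (\<forall>y\<in>S. le Q (f x) (f y) \<longrightarrow> f y = f x)"
      using iso_le[OF assms(1-3) x] iso_inj[OF assms(3)] x assms(4) by blast
    then show ?thesis unfolding maxel_def using that by auto
  qed
  moreover have "maxel P S \<subseteq> S" "maxel Q (f ` S) \<subseteq> f ` S" unfolding maxel_def by auto
  ultimately show ?thesis by blast
qed

lemma image_filter: "(\<And>x. x \<in> M \<Longrightarrow> q (f x) = p x) \<Longrightarrow> f ` {x\<in>M. p x} = {y \<in> f ` M. q y}"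
  by auto

lemma iso_bdm:
  assumes "basic P" "basic Q" "rankfn P d" "iso f P Q" "S \<subseteq> elems P"
  shows "f ` bdm P a n S = bdm Q a n (f ` S)"
proof (cases "n < 0")
  case True then show ?thesis unfolding bdm_def by simp
next
  case False
  have D: "Delta_n P a n S \<subseteq> elems P" using assms(5) unfolding Delta_n_def by auto
  have M: "maxel P S \<subseteq> elems P" using assms(5) unfolding maxel_def by auto
  have e1: "f ` cl P (Delta_n P a n S) = cl Q (Delta_n Q a n (f ` S))"
    using iso_cl[OF assms(1,2,4) D] iso_Delta[OF assms] by simp
  have h: "\<And>x. x \<in> maxel P S \<Longrightarrow> (int (elem_dim Q (f x)) < n) = (int (elem_dim P x) < n)"
    using iso_dim[OF assms(1-4)] M by auto
  have e2: "f ` {x \<in> maxel P S. int (elem_dim P x) < n} = {x \<in> maxel Q (f ` S). int (elem_dim Q x) < n}"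
    using image_filter[where q="\<lambda>y. int (elem_dim Q y) < n" and p="\<lambda>x. int (elem_dim P x) < n" and f=f, OF h] iso_maxel[OF assms(1,2,4,5)] by simp
  have e3: "f ` (\<Union>x\<in>{x \<in> maxel P S. int (elem_dim P x) < n}. cl P {x})
       = (\<Union>x\<in>f ` {x \<in> maxel P S. int (elem_dim P x) < n}. cl Q {x})"
  proof -
    have "f ` cl P {x} = cl Q {f x}" if "x \<in> maxel P S" for x
      using iso_cl[OF assms(1,2,4), of "{x}"] M that by auto
    then show ?thesis by (simp add: image_UN)
  qed
  show ?thesis unfolding bdm_def using False e1 e2 e3 by (simp add: image_Un)
qed


lemma cl_sub: "cl P T \<subseteq> elems P" unfolding cl_def by auto

lemma le_elems: "le P x y \<Longrightarrow> x \<in> elems P \<and> y \<in> elems P" unfolding le_def by simp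

lemma cl_closed:
  assumes "basic P" "x \<in> cl P T" "z \<in> faces P a x"
  shows "z \<in> cl P T"
proof -
  obtain y where y: "y \<in> T" "le P x y" "x \<in> elems P" using assms(2) unfolding cl_def by blast
  have c: "covers P z x" using assms(3) unfolding covers_def by (cases a) auto
  then have zx: "(z, x) \<in> strict_less P" unfolding strict_less_def by auto
  have z: "z \<in> elems P" using covers_elems[OF assms(1) c] by simp
  have "x = y \<or> (x, y) \<in> strict_less P" using y(2) unfolding le_def by simp
  then have "(z, y) \<in> strict_less P" using zx unfolding strict_less_def by (metis trancl_trans)
  then have "le P z y" unfolding le_def using z y le_elems by metis
  then show ?thesis unfolding cl_def using z y(1) by blast
qed

lemma cl_rank:
  assumes "basic P" "rankfn P d" "x \<in> cl P T"
  shows "\<exists>y\<in>T. d x \<le> d y"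
proof -
  obtain y where y: "y \<in> T" "le P x y" using assms(3) unfolding cl_def by blast
  then have "x = y \<or> (x, y) \<in> strict_less P" unfolding le_def by simp
  then have "d x \<le> d y" using strict_less_rank[OF assms(1,2)] by fastforce
  then show ?thesis using y by blast
qed

lemma cl_mono_self: "T \<subseteq> elems P \<Longrightarrow> T \<subseteq> cl P T" unfolding cl_def le_def by auto

lemma bdm_sub: "bdm P a n U \<subseteq> elems P"
  unfolding bdm_def using cl_sub[of P] by (simp add: UN_least)

lemma bdm_closed:
  assumes "basic P" "x \<in> bdm P a n U" "z \<in> faces P b x"
  shows "z \<in> bdm P a n U"
proof (cases "n < 0")
  case True then show ?thesis using assms(2) unfolding bdm_def by simp
next
  case False
  then have "x \<in> cl P (Delta_n P a n U) \<or> (\<exists>y\<in>{x \<in> maxel P U. int (elem_dim P x) < n}. x \<in> cl P {y})"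
    using assms(2) unfolding bdm_def by auto
  then have "z \<in> cl P (Delta_n P a n U) \<or> (\<exists>y\<in>{x \<in> maxel P U. int (elem_dim P x) < n}. z \<in> cl P {y})"
    using cl_closed[OF assms(1) _ assms(3)] by metis
  then show ?thesis using False unfolding bdm_def by auto
qed

lemma bdm_rank:
  assumes "basic P" "rankfn P d" "U \<subseteq> elems P" "x \<in> bdm P a n U"
  shows "int (d x) \<le> n"
proof (cases "n < 0")
  case True then show ?thesis using assms(4) unfolding bdm_def by simp
next
  case False
  then have "x \<in> cl P (Delta_n P a n U) \<or> (\<exists>y\<in>{x \<in> maxel P U. int (elem_dim P x) < n}. x \<in> cl P {y})"
    using assms(4) unfolding bdm_def by auto
  then show ?thesis
  proof
    assume "x \<in> cl P (Delta_n P a n U)"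
    then obtain y where "y \<in> Delta_n P a n U" "d x \<le> d y" using cl_rank[OF assms(1,2)] by blast
    moreover then have "y \<in> elems P" "int (elem_dim P y) = n" using assms(3) unfolding Delta_n_def by auto
    ultimately show ?thesis using rank_elem_dim[OF assms(1,2)] by fastforce
  next
    assume "\<exists>y\<in>{x \<in> maxel P U. int (elem_dim P x) < n}. x \<in> cl P {y}"
    then obtain y where "y \<in> maxel P U" "int (elem_dim P y) < n" "x \<in> cl P {y}" by blast
    moreover then have "y \<in> elems P" "d x \<le> d y" using assms(3) cl_rank[OF assms(1,2)] unfolding maxel_def by auto
    ultimately show ?thesis using rank_elem_dim[OF assms(1,2)] by fastforce
  qed
qed

lemma bdn_sub: "bdn P n U \<subseteq> elems P" unfolding bdn_def using bdm_sub[of P] by (metis Un_least)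
lemma bdn_closed: "basic P \<Longrightarrow> x \<in> bdn P n U \<Longrightarrow> z \<in> faces P b x \<Longrightarrow> z \<in> bdn P n U"
  unfolding bdn_def by (metis UnE UnI1 UnI2 bdm_closed)
lemma bdn_rank: "basic P \<Longrightarrow> rankfn P d \<Longrightarrow> U \<subseteq> elems P \<Longrightarrow> x \<in> bdn P n U \<Longrightarrow> int (d x) \<le> n"
  unfolding bdn_def by (metis UnE bdm_rank)

lemma ogp_dim_rank:
  assumes "basic P" "rankfn P d" "elems P \<noteq> {}"
  shows "\<exists>x\<in>elems P. ogp_dim P = int (d x) \<and> (\<forall>y\<in>elems P. d y \<le> d x)"
proof -
  have fin: "finite (elems P)" using basic_finite[OF assms(1)] .
  have "Max (d ` elems P) \<in> d ` elems P" using Max_in[of "d ` elems P"] fin assms(3) by simp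
  then obtain x where x: "x \<in> elems P" "d x = Max (d ` elems P)" by (metis imageE)
  have le: "\<forall>y\<in>elems P. d y \<le> d x" using x(2) fin by simp
  have "ogp_dim P = Max (insert (-1) ((\<lambda>x. int (elem_dim P x)) ` elems P))"
    unfolding ogp_dim_def set_dim_def ..
  also have "(\<lambda>x. int (elem_dim P x)) ` elems P = (\<lambda>x. int (d x)) ` elems P"
    using rank_elem_dim[OF assms(1,2)] by simp
  also have "Max (insert (-1) ((\<lambda>x. int (d x)) ` elems P)) = int (d x)"
    by (rule Max_eqI) (use fin x(1) le in auto)
  finally show ?thesis using x(1) le by blast
qed

lemma ogp_dim_iso:
  assumes "basic P" "basic Q" "rankfn P d" "iso f P Q"
  shows "ogp_dim Q = ogp_dim P"
proof -
  have "elems Q = f ` elems P" using iso_bij[OF assms(4)] bij_betw_def by metis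
  then have "(\<lambda>x. int (elem_dim Q x)) ` elems Q = (\<lambda>x. int (elem_dim P x)) ` elems P"
    using iso_dim[OF assms] by (simp add: image_image)
  then show ?thesis unfolding ogp_dim_def set_dim_def by simp
qed



section \<open>Path model\<close>

fun ptE :: "nat \<Rightarrow> elt" where "ptE 0 = Pt" | "ptE (Suc j) = Lf (ptE j)"
fun edE :: "nat \<Rightarrow> elt" where "edE 0 = Top" | "edE (Suc j) = Rt (edE j)"

lemma ptE_inj[simp]: "ptE i = ptE j \<longleftrightarrow> i = j"
  by (induction i arbitrary: j; case_tac j; simp)
lemma edE_inj[simp]: "edE i = edE j \<longleftrightarrow> i = j"
  by (induction i arbitrary: j; case_tac j; simp)
lemma ptE_edE[simp]: "ptE i \<noteq> edE j"
  by (cases i; cases j; simp)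
lemma edE_ptE[simp]: "edE j \<noteq> ptE i"
  using ptE_edE by metis

declare ptE.simps[simp del] edE.simps[simp del]

definition Mp :: "nat \<Rightarrow> elt ogp" where
  "Mp n = \<lparr>elems = ptE ` {..n} \<union> edE ` {..<n},
     faces = (\<lambda>a x. {ptE (if a then Suc j else j) | j. j < n \<and> x = edE j})\<rparr>"

lemma Mp_elems: "elems (Mp n) = ptE ` {..n} \<union> edE ` {..<n}" unfolding Mp_def by simp
lemma Mp_faces_pt[simp]: "faces (Mp n) a (ptE k) = {}" unfolding Mp_def by simp
lemma Mp_faces_ed[simp]: "faces (Mp n) a (edE j) = (if j < n then {ptE (if a then Suc j else j)} else {})"
  unfolding Mp_def by auto
lemma Mp_faces_gen: "faces (Mp n) a x = {ptE (if a then Suc j else j) | j. j < n \<and> x = edE j}"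
  unfolding Mp_def by simp

lemma Mp_basic: "basic (Mp n)"
  unfolding basic_def Mp_elems Mp_faces_gen by (auto split: if_splits)

definition dM :: "elt \<Rightarrow> nat" where "dM x = (if \<exists>j. x = edE j then 1 else 0)"

lemma Mp_covers: "covers (Mp n) z x \<longleftrightarrow> (\<exists>j<n. x = edE j \<and> (z = ptE j \<or> z = ptE (Suc j)))"
  unfolding covers_def Mp_faces_gen by auto

lemma Mp_rank: "rankfn (Mp n) dM"
  unfolding rankfn_def Mp_covers dM_def Mp_elems by auto

lemma Mp_ogpos: "ogpos (Mp n)" using rank_ogpos[OF Mp_basic Mp_rank] .

lemma Mp_dim_pt[simp]: "k \<le> n \<Longrightarrow> elem_dim (Mp n) (ptE k) = 0"
  using rank_elem_dim[OF Mp_basic Mp_rank] unfolding Mp_elems dM_def by auto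
lemma Mp_dim_ed[simp]: "j < n \<Longrightarrow> elem_dim (Mp n) (edE j) = 1"
  using rank_elem_dim[OF Mp_basic Mp_rank] unfolding Mp_elems dM_def by auto

lemma Mp_dim: "1 \<le> n \<Longrightarrow> ogp_dim (Mp n) = 1"
proof -
  assume n: "1 \<le> n"
  obtain x where x: "x \<in> elems (Mp n)" "ogp_dim (Mp n) = int (dM x)" "\<forall>y\<in>elems (Mp n). dM y \<le> dM x"
    using ogp_dim_rank[OF Mp_basic Mp_rank] unfolding Mp_elems by blast
  have "edE 0 \<in> elems (Mp n)" using n unfolding Mp_elems by (intro UnI2 image_eqI[of _ edE 0]) auto
  then have "dM x \<ge> 1" using x(3) unfolding dM_def by fastforce
  moreover have "dM x \<le> 1" unfolding dM_def by simp
  ultimately show ?thesis using x(2) by simp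
qed

lemma Mp_strict:
  assumes "(x, y) \<in> strict_less (Mp n)"
  shows "\<exists>j<n. y = edE j \<and> (x = ptE j \<or> x = ptE (Suc j))"
  using assms unfolding strict_less_def
proof (induction rule: trancl_induct)
  case (base y) then show ?case using Mp_covers by simp
next
  case (step y z)
  then show ?case using Mp_covers by fastforce
qed

lemma Mp_le: "le (Mp n) x y \<longleftrightarrow> x \<in> elems (Mp n) \<and> y \<in> elems (Mp n) \<and>
   (x = y \<or> (\<exists>j<n. y = edE j \<and> (x = ptE j \<or> x = ptE (Suc j))))"
proof -
  have "(\<exists>j<n. y = edE j \<and> (x = ptE j \<or> x = ptE (Suc j))) \<Longrightarrow> (x, y) \<in> strict_less (Mp n)"
    unfolding strict_less_def using Mp_covers by blast
  then show ?thesis unfolding le_def using Mp_strict by blast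
qed

lemma Mp_cl_pt: "k \<le> n \<Longrightarrow> cl (Mp n) {ptE k} = {ptE k}"
  unfolding cl_def Mp_le by (auto simp: Mp_elems)

lemma Mp_cl_ed: "j < n \<Longrightarrow> cl (Mp n) {edE j} = {edE j, ptE j, ptE (Suc j)}"
  unfolding cl_def Mp_le by (auto simp: Mp_elems)

lemma Mp_cofaces_pt: "cofaces (Mp n) b (ptE k) = {edE j | j. j < n \<and> k = (if b then Suc j else j)}"
  unfolding cofaces_def Mp_faces_gen Mp_elems by auto

lemma Mp_bdm_pt: "k \<le> n \<Longrightarrow> bdm (Mp n) a 0 {ptE k} = {ptE k}"
proof -
  assume k: "k \<le> n"
  have "Delta_n (Mp n) a 0 {ptE k} = {ptE k}"
    unfolding Delta_n_def using k by (auto simp: Mp_cofaces_pt)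
  then show ?thesis unfolding bdm_def using Mp_cl_pt[OF k] by simp
qed

lemma Mp_bdm_ed: "j < n \<Longrightarrow> bdm (Mp n) a 0 {edE j, ptE j, ptE (Suc j)} = {ptE (if a then Suc j else j)}"
proof -
  assume j: "j < n"
  have "Delta_n (Mp n) a 0 {edE j, ptE j, ptE (Suc j)} = {ptE (if a then Suc j else j)}"
    unfolding Delta_n_def using j by (cases a) (auto simp: Mp_cofaces_pt)
  then show ?thesis unfolding bdm_def using Mp_cl_pt j by auto
qed

lemma Mp_aux_F: "k \<le> n \<Longrightarrow> ({edE j |j. j < n \<and> k = Suc j} \<inter> (ptE ` {..n} \<union> edE ` {..<n}) = {}) \<longleftrightarrow> k = 0"
proof
  assume k: "k \<le> n" and e: "{edE j |j. j < n \<and> k = Suc j} \<inter> (ptE ` {..n} \<union> edE ` {..<n}) = {}"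
  show "k = 0"
  proof (rule ccontr)
    assume "k \<noteq> 0"
    then have "edE (k - 1) \<in> {edE j |j. j < n \<and> k = Suc j} \<inter> (ptE ` {..n} \<union> edE ` {..<n})" using k by auto
    then show False using e by blast
  qed
qed auto

lemma Mp_bdm_all: "1 \<le> n \<Longrightarrow> bdm (Mp n) a 0 (elems (Mp n)) = {ptE (if a then n else 0)}"
proof -
  assume n: "1 \<le> n"
  have "Delta_n (Mp n) a 0 (elems (Mp n)) = {ptE (if a then n else 0)}"
    unfolding Delta_n_def using n
    by (cases a) (auto simp: Mp_elems Mp_cofaces_pt Mp_aux_F)
  then show ?thesis unfolding bdm_def using Mp_cl_pt n by auto
qed


definition closed_in :: "'a ogp \<Rightarrow> 'a set \<Rightarrow> bool" where
  "closed_in P S \<longleftrightarrow> S \<subseteq> elems P \<and> (\<forall>x\<in>S. \<forall>a. faces P a x \<subseteq> S)"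

lemma restrict_elems[simp]: "elems (restrict_ogp P S) = S" unfolding restrict_ogp_def by simp
lemma restrict_faces: "faces (restrict_ogp P S) a x = (if x \<in> S then faces P a x \<inter> S else {})"
  unfolding restrict_ogp_def by simp
lemma restrict_faces_closed: "closed_in P S \<Longrightarrow> x \<in> S \<Longrightarrow> faces (restrict_ogp P S) a x = faces P a x"
  unfolding restrict_faces closed_in_def by auto

lemma restrict_basic: "basic P \<Longrightarrow> S \<subseteq> elems P \<Longrightarrow> basic (restrict_ogp P S)"
  unfolding basic_def restrict_faces by (auto intro: finite_subset)

lemma restrict_rank:
  assumes "closed_in P S" "rankfn P d"
  shows "rankfn (restrict_ogp P S) d"
proof -
  have c: "covers (restrict_ogp P S) z x \<longleftrightarrow> covers P z x" if "x \<in> S" for x z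
    unfolding covers_def using restrict_faces_closed[OF assms(1) that] by simp
  have S: "S \<subseteq> elems P" using assms(1) unfolding closed_in_def by simp
  show ?thesis using assms(2) c S unfolding rankfn_def by auto
qed

lemma cl_closed_in: assumes "basic P" shows "closed_in P (cl P T)"
  unfolding closed_in_def
proof (intro conjI ballI allI subsetI)
  show "x \<in> cl P T \<Longrightarrow> x \<in> elems P" for x using cl_sub[of P T] by (rule subsetD)
  show "x \<in> cl P T \<Longrightarrow> z \<in> faces P a x \<Longrightarrow> z \<in> cl P T" for x a z using cl_closed[OF assms] .
qed
lemma bdm_closed_in: assumes "basic P" shows "closed_in P (bdm P b n U)"
  unfolding closed_in_def
proof (intro conjI ballI allI subsetI)
  show "x \<in> bdm P b n U \<Longrightarrow> x \<in> elems P" for x using bdm_sub[of P b n U] by (rule subsetD)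
  show "x \<in> bdm P b n U \<Longrightarrow> z \<in> faces P a x \<Longrightarrow> z \<in> bdm P b n U" for x a z using bdm_closed[OF assms] .
qed
lemma bdn_closed_in: assumes "basic P" shows "closed_in P (bdn P n U)"
  unfolding closed_in_def
proof (intro conjI ballI allI subsetI)
  show "x \<in> bdn P n U \<Longrightarrow> x \<in> elems P" for x using bdn_sub[of P n U] by (rule subsetD)
  show "x \<in> bdn P n U \<Longrightarrow> z \<in> faces P a x \<Longrightarrow> z \<in> bdn P n U" for x a z using bdn_closed[OF assms] .
qed

locale glue_setting =
  fixes P Q :: "elt ogp" and S S' :: "elt set" and phi :: "elt \<Rightarrow> elt" and dP dQ :: "elt \<Rightarrow> nat"
  assumes bP: "basic P" and bQ: "basic Q" and rP: "rankfn P dP" and rQ: "rankfn Q dQ"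
    and cS: "closed_in Q S" and cS': "closed_in P S'"
    and iso_phi: "iso phi (restrict_ogp Q S) (restrict_ogp P S')"
begin

lemma S_sub: "S \<subseteq> elems Q" using cS unfolding closed_in_def by simp
lemma S'_sub: "S' \<subseteq> elems P" using cS' unfolding closed_in_def by simp

lemma phi_in: "s \<in> S \<Longrightarrow> phi s \<in> S'"
  using iso_in[OF iso_phi] by simp
lemma phi_inj: "s \<in> S \<Longrightarrow> t \<in> S \<Longrightarrow> phi s = phi t \<longleftrightarrow> s = t"
  using iso_inj[OF iso_phi] by simp

lemma phi_rank: "s \<in> S \<Longrightarrow> dP (phi s) = dQ s"
proof -
  assume s: "s \<in> S"
  have bR: "basic (restrict_ogp Q S)" using restrict_basic[OF bQ S_sub] .
  have bR': "basic (restrict_ogp P S')" using restrict_basic[OF bP S'_sub] .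
  have r1: "rankfn (restrict_ogp Q S) dQ" using restrict_rank[OF cS rQ] .
  have r2: "rankfn (restrict_ogp P S') dP" using restrict_rank[OF cS' rP] .
  have "elem_dim (restrict_ogp P S') (phi s) = elem_dim (restrict_ogp Q S) s"
    using iso_dim[OF bR bR' r1 iso_phi] s by simp
  also have "\<dots> = dQ s" using rank_elem_dim[OF bR r1] s by simp
  finally show ?thesis using rank_elem_dim[OF bR' r2] phi_in[OF s] by simp
qed

definition gd :: "elt \<Rightarrow> nat" where
  "gd e = (case e of Lf x \<Rightarrow> dP x | Rt y \<Rightarrow> dQ y | _ \<Rightarrow> 0)"

abbreviation "G \<equiv> glue P Q S phi"

lemma G_elems: "elems G = Lf ` elems P \<union> Rt ` (elems Q - S)" unfolding glue_def by simp

lemma G_faces_Lf: "x \<in> elems P \<Longrightarrow> faces G a (Lf x) = Lf ` faces P a x"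
  unfolding glue_def glue_faces_def by simp
lemma G_faces_Rt: "y \<in> elems Q - S \<Longrightarrow> faces G a (Rt y) = glue_inr S phi ` faces Q a y"
  unfolding glue_def glue_faces_def by simp

lemma G_faces_out: "e \<notin> elems G \<Longrightarrow> faces G a e = {}"
  unfolding glue_def glue_faces_def by (cases e) auto

lemma inr_in: "y \<in> elems Q \<Longrightarrow> glue_inr S phi y \<in> elems G"
  unfolding G_elems glue_inr_def using phi_in S'_sub by auto

lemma inr_gd: "y \<in> elems Q \<Longrightarrow> gd (glue_inr S phi y) = dQ y"
  unfolding glue_inr_def gd_def using phi_rank by auto

lemma inr_inj: "y \<in> elems Q \<Longrightarrow> y' \<in> elems Q \<Longrightarrow> glue_inr S phi y = glue_inr S phi y' \<longleftrightarrow> y = y'"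
  unfolding glue_inr_def using phi_inj by auto

lemma inj_img_disj: "inj_on f A \<Longrightarrow> X \<subseteq> A \<Longrightarrow> Y \<subseteq> A \<Longrightarrow> X \<inter> Y = {} \<Longrightarrow> f ` X \<inter> f ` Y = {}"
  unfolding inj_on_def by blast

lemma G_basic: "basic G"
proof -
  have fin: "finite (elems G)" unfolding G_elems using basic_finite[OF bP] basic_finite[OF bQ] by simp
  have sub: "faces G a e \<subseteq> elems G" for a e
  proof (cases "e \<in> elems G")
    case False then show ?thesis using G_faces_out by simp
  next
    case True
    then consider x where "e = Lf x" "x \<in> elems P" | y where "e = Rt y" "y \<in> elems Q - S"
      unfolding G_elems by blast
    then show ?thesis
    proof cases
      case 1
      have "faces G a e = Lf ` faces P a x" using 1 G_faces_Lf by simp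
      moreover have "Lf ` faces P a x \<subseteq> Lf ` elems P" using basic_faces[OF bP] by (rule image_mono)
      ultimately show ?thesis unfolding G_elems by blast
    next
      case 2
      have "faces G a e = glue_inr S phi ` faces Q a y" using 2 G_faces_Rt by simp
      then show ?thesis using inr_in basic_faces[OF bQ, of a y] by auto
    qed
  qed
  have disj: "faces G True e \<inter> faces G False e = {}" for e
  proof (cases "e \<in> elems G")
    case False then show ?thesis using G_faces_out by simp
  next
    case True
    then consider x where "e = Lf x" "x \<in> elems P" | y where "e = Rt y" "y \<in> elems Q - S"
      unfolding G_elems by blast
    then show ?thesis
    proof cases
      case 1
      have "faces P True x \<inter> faces P False x = {}" using bP unfolding basic_def by simp
      then show ?thesis using 1 G_faces_Lf by auto
    next
      case 2
      have d: "faces Q True y \<inter> faces Q False y = {}" using bQ unfolding basic_def by simp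
      have "inj_on (glue_inr S phi) (elems Q)" using inr_inj by (meson inj_onI)
      then have "glue_inr S phi ` faces Q True y \<inter> glue_inr S phi ` faces Q False y = {}"
        using d basic_faces[OF bQ, of True y] basic_faces[OF bQ, of False y] inj_img_disj by metis
      then show ?thesis using 2 G_faces_Rt by simp
    qed
  qed
  show ?thesis unfolding basic_def
    by (intro conjI allI impI fin sub G_faces_out disj)
qed

lemma G_covers_Lf: "x \<in> elems P \<Longrightarrow> covers G z (Lf x) \<longleftrightarrow> (\<exists>z'. z = Lf z' \<and> covers P z' x)"
  unfolding covers_def using G_faces_Lf by auto

lemma G_covers_Rt: "y \<in> elems Q - S \<Longrightarrow> covers G z (Rt y) \<longleftrightarrow> (\<exists>z'. z = glue_inr S phi z' \<and> covers Q z' y)"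
  unfolding covers_def using G_faces_Rt by auto

lemma G_rank: "rankfn G gd"
proof -
  have 1: "gd e = Suc (gd z)" if e: "e \<in> elems G" and c: "covers G z e" for e z
  proof -
    consider x where "e = Lf x" "x \<in> elems P" | y where "e = Rt y" "y \<in> elems Q - S"
      using e unfolding G_elems by blast
    then show ?thesis
    proof cases
      case 1
      then obtain z' where "z = Lf z'" "covers P z' x" using G_covers_Lf c by blast
      then show ?thesis using 1 covers_rank[OF bP rP] unfolding gd_def by simp
    next
      case 2
      then obtain z' where z': "z = glue_inr S phi z'" "covers Q z' y" using G_covers_Rt c by blast
      then have "z' \<in> elems Q" using covers_elems[OF bQ] by blast
      then show ?thesis using 2 z' covers_rank[OF bQ rQ] inr_gd unfolding gd_def by simp
    qed
  qed
  have 2: "gd e = 0" if e: "e \<in> elems G" and c: "\<forall>z. \<not> covers G z e" for e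
  proof -
    consider x where "e = Lf x" "x \<in> elems P" | y where "e = Rt y" "y \<in> elems Q - S"
      using e unfolding G_elems by blast
    then show ?thesis
    proof cases
      case 1
      then have "\<forall>z. \<not> covers P z x" using G_covers_Lf c by blast
      then show ?thesis using 1 rP unfolding rankfn_def gd_def by simp
    next
      case 2
      then have "\<forall>z. \<not> covers Q z y" using G_covers_Rt c by blast
      then show ?thesis using 2 rQ unfolding rankfn_def gd_def by simp
    qed
  qed
  show ?thesis unfolding rankfn_def using 1 2 by blast
qed

lemma G_ne: "elems P \<noteq> {} \<Longrightarrow> elems G \<noteq> {}" unfolding G_elems by simp

lemma G_dim_P: "x \<in> elems P \<Longrightarrow> int (dP x) \<le> ogp_dim G"
proof -
  assume x: "x \<in> elems P"
  then have ne: "elems G \<noteq> {}" using G_ne by auto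
  obtain m where "m \<in> elems G" "ogp_dim G = int (gd m)" "\<forall>y\<in>elems G. gd y \<le> gd m"
    using ogp_dim_rank[OF G_basic G_rank ne] by blast
  moreover have "Lf x \<in> elems G" using x unfolding G_elems by blast
  ultimately show ?thesis unfolding gd_def by force
qed

lemma G_dim_Q: "y \<in> elems Q - S \<Longrightarrow> int (dQ y) \<le> ogp_dim G"
proof -
  assume y: "y \<in> elems Q - S"
  have yy: "Rt y \<in> elems G" using y unfolding G_elems by blast
  then have ne: "elems G \<noteq> {}" by auto
  obtain m where "m \<in> elems G" "ogp_dim G = int (gd m)" "\<forall>y\<in>elems G. gd y \<le> gd m"
    using ogp_dim_rank[OF G_basic G_rank ne] by blast
  then show ?thesis using yy unfolding gd_def by force
qed

end


lemma paste_setting: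
  assumes "basic P" "basic Q" "rankfn P dP" "rankfn Q dQ" "paste_ok k P Q phi"
  shows "glue_setting P Q (bdm Q False (int k) (elems Q)) (bdm P True (int k) (elems P)) phi dP dQ"
  unfolding glue_setting_def
  using assms bdm_closed_in[OF assms(2)] bdm_closed_in[OF assms(1)] unfolding paste_ok_def by blast

lemma paste_basic_rank:
  assumes "basic P" "basic Q" "rankfn P dP" "rankfn Q dQ" "paste_ok k P Q phi"
  shows "basic (paste k P Q phi) \<and> (\<exists>d. rankfn (paste k P Q phi) d)"
proof -
  interpret g: glue_setting P Q "bdm Q False (int k) (elems Q)" "bdm P True (int k) (elems P)" phi dP dQ
    using paste_setting[OF assms] .
  show ?thesis unfolding paste_def using g.G_basic g.G_rank by blast
qed

lemma paste_ne: "elems P \<noteq> {} \<Longrightarrow> elems (paste k P Q phi) \<noteq> {}"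
  unfolding paste_def glue_def by simp

lemma paste_dims:
  assumes "basic P" "basic Q" "rankfn P dP" "rankfn Q dQ" "paste_ok k P Q phi"
    and "elems P \<noteq> {}" "elems Q \<noteq> {}"
  shows "ogp_dim P \<le> ogp_dim (paste k P Q phi) \<and> ogp_dim Q \<le> ogp_dim (paste k P Q phi)"
proof -
  interpret g: glue_setting P Q "bdm Q False (int k) (elems Q)" "bdm P True (int k) (elems P)" phi dP dQ
    using paste_setting[OF assms(1-5)] .
  obtain x where x: "x \<in> elems P" "ogp_dim P = int (dP x)"
    using ogp_dim_rank[OF assms(1,3,6)] by blast
  obtain y where y: "y \<in> elems Q" "ogp_dim Q = int (dQ y)"
    using ogp_dim_rank[OF assms(2,4,7)] by blast
  have k: "int k < ogp_dim Q" using assms(5) unfolding paste_ok_def by simp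
  have "y \<notin> bdm Q False (int k) (elems Q)"
    using bdm_rank[OF assms(2,4), of "elems Q" y False "int k"] k y by auto
  then have "ogp_dim Q \<le> ogp_dim g.G" using g.G_dim_Q y by simp
  moreover have "ogp_dim P \<le> ogp_dim g.G" using g.G_dim_P x by simp
  ultimately show ?thesis unfolding paste_def by simp
qed

section \<open>Arrow\<close>

lemma arrow_setting:
  assumes "basic P" "basic Q" "rankfn P dP" "rankfn Q dQ" "arrow_ok P Q phi"
  shows "glue_setting P Q (bd_all Q) (bd_all P) phi dP dQ"
  unfolding glue_setting_def bd_all_def
  using assms bdn_closed_in[OF assms(2)] bdn_closed_in[OF assms(1)] unfolding arrow_ok_def bd_all_def by blast

lemma arrow_elems: "elems (arrow P Q phi) = insert Top (elems (glue P Q (bd_all Q) phi))"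
  unfolding arrow_def by simp

lemma arrow_faces_Top_F: "faces (arrow P Q phi) False Top = Lf ` {x \<in> elems P. int (elem_dim P x) = ogp_dim P}"
  unfolding arrow_def by simp
lemma arrow_faces_Top_T: "faces (arrow P Q phi) True Top =
   glue_inr (bd_all Q) phi ` {y \<in> elems Q. int (elem_dim Q y) = ogp_dim Q}"
  unfolding arrow_def by simp
lemma arrow_faces_other: "e \<noteq> Top \<Longrightarrow> faces (arrow P Q phi) a e = faces (glue P Q (bd_all Q) phi) a e"
  unfolding arrow_def glue_def by simp

lemma Top_notin_glue: "Top \<notin> elems (glue P Q S phi)" unfolding glue_def by auto

lemma arrow_basic_rank:
  assumes "basic P" "basic Q" "rankfn P dP" "rankfn Q dQ" "arrow_ok P Q phi"
    and "elems P \<noteq> {}" "elems Q \<noteq> {}"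
  shows "basic (arrow P Q phi) \<and> (\<exists>d. rankfn (arrow P Q phi) d) \<and> ogp_dim (arrow P Q phi) = ogp_dim P + 1"
proof -
  interpret g: glue_setting P Q "bd_all Q" "bd_all P" phi dP dQ
    using arrow_setting[OF assms(1-5)] .
  let ?A = "arrow P Q phi"
  obtain xm where xm: "xm \<in> elems P" "ogp_dim P = int (dP xm)" "\<forall>y\<in>elems P. dP y \<le> dP xm"
    using ogp_dim_rank[OF assms(1,3,6)] by blast
  define n where "n = dP xm"
  have dimQ: "ogp_dim Q = int n" using assms(5) xm(2) unfolding arrow_ok_def n_def by simp
  have dimP: "ogp_dim P = int n" using xm(2) n_def by simp
  have leP: "\<forall>y\<in>elems P. dP y \<le> n" using xm(3) n_def by simp
  obtain ym where ym: "ym \<in> elems Q" "ogp_dim Q = int (dQ ym)" "\<forall>y\<in>elems Q. dQ y \<le> dQ ym"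
    using ogp_dim_rank[OF assms(2,4,7)] by blast
  have leQ: "\<forall>y\<in>elems Q. dQ y \<le> n" using ym dimQ by simp
  have FT: "faces ?A False Top = Lf ` {x \<in> elems P. dP x = n}"
    using arrow_faces_Top_F[of P Q phi] rank_elem_dim[OF assms(1,3)] dimP by auto
  have notS: "y \<notin> bd_all Q" if "y \<in> elems Q" "dQ y = n" for y
    using bdn_rank[OF assms(2,4), of "elems Q" y "ogp_dim Q - 1"] that dimQ unfolding bd_all_def by auto
  have TT: "faces ?A True Top = Rt ` {y \<in> elems Q. dQ y = n}"
  proof -
    have "faces ?A True Top = glue_inr (bd_all Q) phi ` {y \<in> elems Q. dQ y = n}"
      using arrow_faces_Top_T[of P Q phi] rank_elem_dim[OF assms(2,4)] dimQ by auto
    also have "\<dots> = Rt ` {y \<in> elems Q. dQ y = n}"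
      unfolding glue_inr_def using notS by auto
    finally show ?thesis .
  qed
  have elA: "elems ?A = insert Top (elems g.G)" using arrow_elems .
  have Lf_in: "x \<in> elems P \<Longrightarrow> Lf x \<in> elems g.G" for x using g.G_elems by auto
  have Rt_in: "y \<in> elems Q \<Longrightarrow> y \<notin> bd_all Q \<Longrightarrow> Rt y \<in> elems g.G" for y using g.G_elems by auto
  have bG: "basic g.G" using g.G_basic .
  have fin: "finite (elems ?A)" using elA basic_finite[OF bG] by simp
  have sub: "faces ?A a e \<subseteq> elems ?A" for a e
  proof (cases "e = Top")
    case True
    then show ?thesis using FT TT Lf_in Rt_in notS elA by (cases a) auto
  next
    case False
    then show ?thesis using arrow_faces_other[OF False, of P Q phi a] basic_faces[OF bG, of a e] elA by auto
  qed
  have out: "e \<notin> elems ?A \<Longrightarrow> faces ?A a e = {}" for a e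
  proof -
    assume e: "e \<notin> elems ?A"
    then have "e \<noteq> Top" "e \<notin> elems g.G" using elA by auto
    then show ?thesis using arrow_faces_other basic_out[OF bG] by metis
  qed
  have disj: "faces ?A True e \<inter> faces ?A False e = {}" for e
  proof (cases "e = Top")
    case True then show ?thesis using FT TT by auto
  next
    case False then show ?thesis using arrow_faces_other[OF False] bG unfolding basic_def by metis
  qed
  have bA: "basic ?A" unfolding basic_def by (intro conjI allI impI fin sub out disj)
  define ad where "ad e = (if e = Top then Suc n else g.gd e)" for e
  have rG: "rankfn g.G g.gd" using g.G_rank .
  have cov: "e \<noteq> Top \<Longrightarrow> covers ?A z e \<longleftrightarrow> covers g.G z e" for e z
    unfolding covers_def using arrow_faces_other by metis
  have covT: "covers ?A z Top \<longleftrightarrow> z \<in> Lf ` {x \<in> elems P. dP x = n} \<or> z \<in> Rt ` {y \<in> elems Q. dQ y = n}" for z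
    unfolding covers_def using FT TT by auto
  have gdle: "g.gd e \<le> n" if "e \<in> elems g.G" for e
    using that leP leQ unfolding g.G_elems g.gd_def by auto
  have r1: "ad e = Suc (ad z)" if e: "e \<in> elems ?A" and c: "covers ?A z e" for e z
  proof (cases "e = Top")
    case True
    then have "z \<in> Lf ` {x \<in> elems P. dP x = n} \<or> z \<in> Rt ` {y \<in> elems Q. dQ y = n}" using c covT by simp
    then show ?thesis unfolding ad_def g.gd_def using True by auto
  next
    case False
    then have cG: "covers g.G z e" and eG: "e \<in> elems g.G" using c cov e elA by auto
    then have "z \<noteq> Top" using covers_elems[OF bG cG] Top_notin_glue by metis
    then show ?thesis using covers_rank[OF bG rG cG] False unfolding ad_def by simp
  qed
  have r2: "ad e = 0" if e: "e \<in> elems ?A" and c: "\<forall>z. \<not> covers ?A z e" for e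
  proof (cases "e = Top")
    case True
    have "Lf xm \<in> Lf ` {x \<in> elems P. dP x = n}" using xm(1) n_def by blast
    then show ?thesis using c covT True by blast
  next
    case False
    then have "\<forall>z. \<not> covers g.G z e" "e \<in> elems g.G" using c cov e elA by auto
    then show ?thesis using rG False unfolding rankfn_def ad_def by simp
  qed
  have rA: "rankfn ?A ad" unfolding rankfn_def using r1 r2 by blast
  have ne: "elems ?A \<noteq> {}" using elA by simp
  obtain m where m: "m \<in> elems ?A" "ogp_dim ?A = int (ad m)" "\<forall>y\<in>elems ?A. ad y \<le> ad m"
    using ogp_dim_rank[OF bA rA ne] by blast
  have "ad Top = Suc n" unfolding ad_def by simp
  moreover have "ad y \<le> Suc n" if "y \<in> elems ?A" for y
  proof (cases "y = Top")
    case False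
    then have "y \<in> elems g.G" using that elA by auto
    then have "g.gd y \<le> n" by (rule gdle)
    then show ?thesis using False unfolding ad_def by simp
  qed (simp add: ad_def)
  ultimately have "ad m = Suc n" using m elA by (metis insertI1 le_antisym)
  then have "ogp_dim ?A = ogp_dim P + 1" using m(2) dimP by simp
  then show ?thesis using bA rA by blast
qed

lemma arrow_ne: "elems (arrow P Q phi) \<noteq> {}" using arrow_elems by simp


lemma edE_img[simp]: "edE i \<in> edE ` A \<longleftrightarrow> i \<in> A" by auto
lemma ptE_img[simp]: "ptE i \<in> ptE ` A \<longleftrightarrow> i \<in> A" by auto
lemma edE_img2[simp]: "edE i \<notin> ptE ` A" by auto
lemma ptE_img2[simp]: "ptE i \<notin> edE ` A" by auto

definition sh :: "nat \<Rightarrow> elt \<Rightarrow> elt" where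
  "sh m x = (if \<exists>j. x = ptE j then ptE ((THE j. x = ptE j) - m) else edE ((THE j. x = edE j) - m))"

lemma sh_pt[simp]: "sh m (ptE j) = ptE (j - m)" unfolding sh_def by auto
lemma sh_ed[simp]: "sh m (edE j) = edE (j - m)" unfolding sh_def by auto

definition pj :: "nat \<Rightarrow> (elt \<Rightarrow> elt) \<Rightarrow> (elt \<Rightarrow> elt) \<Rightarrow> elt \<Rightarrow> elt" where
  "pj m f g x = (if x \<in> elems (Mp m) then Lf (f x) else Rt (g (sh m x)))"

lemma pj_pt: "pj m f g (ptE j) = (if j \<le> m then Lf (f (ptE j)) else Rt (g (ptE (j - m))))"
  unfolding pj_def Mp_elems by auto
lemma pj_ed: "pj m f g (edE j) = (if j < m then Lf (f (edE j)) else Rt (g (edE (j - m))))"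
  unfolding pj_def Mp_elems by auto

lemma Mp_mono: "elems (Mp m) \<subseteq> elems (Mp (m + n))" unfolding Mp_elems by auto

lemma sh_maps: "x \<in> elems (Mp (m + n)) - elems (Mp m) \<Longrightarrow> sh m x \<in> elems (Mp n) - {ptE 0}"
  unfolding Mp_elems by auto

lemma sh_inj: "inj_on (sh m) (elems (Mp (m + n)) - elems (Mp m))"
  unfolding inj_on_def Mp_elems by auto

lemma sh_surj: "z \<in> elems (Mp n) - {ptE 0} \<Longrightarrow> \<exists>x\<in>elems (Mp (m + n)) - elems (Mp m). sh m x = z"
proof -
  assume z: "z \<in> elems (Mp n) - {ptE 0}"
  then consider j where "z = ptE j" "0 < j" "j \<le> n" | j where "z = edE j" "j < n"
    unfolding Mp_elems by auto
  then show ?thesis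
  proof cases
    case 1
    then have "ptE (j + m) \<in> elems (Mp (m + n)) - elems (Mp m)" "sh m (ptE (j + m)) = z"
      unfolding Mp_elems by auto
    then show ?thesis by blast
  next
    case 2
    then have "edE (j + m) \<in> elems (Mp (m + n)) - elems (Mp m)" "sh m (edE (j + m)) = z"
      unfolding Mp_elems by auto
    then show ?thesis by blast
  qed
qed

lemma sh_image: "sh m ` (elems (Mp (m + n)) - elems (Mp m)) = elems (Mp n) - {ptE 0}"
proof (intro equalityI subsetI)
  fix z assume "z \<in> sh m ` (elems (Mp (m + n)) - elems (Mp m))"
  then show "z \<in> elems (Mp n) - {ptE 0}" using sh_maps by auto
next
  fix z assume "z \<in> elems (Mp n) - {ptE 0}"
  then obtain x where "x \<in> elems (Mp (m + n)) - elems (Mp m)" "sh m x = z" using sh_surj by metis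
  then show "z \<in> sh m ` (elems (Mp (m + n)) - elems (Mp m))" by (metis imageI)
qed

lemma Mp_faces_sub: "x \<in> elems (Mp m) \<Longrightarrow> faces (Mp (m + n)) a x = faces (Mp m) a x"
  unfolding Mp_elems by auto

lemma paste_paths:
  assumes bP: "basic P" and bQ: "basic Q" and f: "iso f (Mp m) P" and g: "iso g (Mp n) Q"
    and m: "1 \<le> m" and n: "1 \<le> n" and ok: "paste_ok 0 P Q phi"
  shows "iso (pj m f g) (Mp (m + n)) (paste 0 P Q phi)"
proof -
  let ?S = "bdm Q False 0 (elems Q)" and ?S' = "bdm P True 0 (elems P)"
  let ?h = "pj m f g"
  have rP: "rankfn P (dM \<circ> inv_into (elems (Mp m)) f)" using rank_iso[OF Mp_basic Mp_rank f] .
  have rQ: "rankfn Q (dM \<circ> inv_into (elems (Mp n)) g)" using rank_iso[OF Mp_basic Mp_rank g] .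
  have eP: "elems P = f ` elems (Mp m)" using iso_bij[OF f] bij_betw_def by metis
  have eQ: "elems Q = g ` elems (Mp n)" using iso_bij[OF g] bij_betw_def by metis
  have S: "?S = {g (ptE 0)}"
    using iso_bdm[OF Mp_basic bQ Mp_rank g subset_refl, of False 0] Mp_bdm_all[OF n, of False] eQ by simp
  have S': "?S' = {f (ptE m)}"
    using iso_bdm[OF Mp_basic bP Mp_rank f subset_refl, of True 0] Mp_bdm_all[OF m, of True] eP by simp
  interpret gs: glue_setting P Q ?S ?S' phi "dM \<circ> inv_into (elems (Mp m)) f" "dM \<circ> inv_into (elems (Mp n)) g"
    using paste_setting[OF bP bQ rP rQ ok] by simp
  have key: "phi (g (ptE 0)) = f (ptE m)" using gs.phi_in S S' by simp
  have T: "paste 0 P Q phi = gs.G" unfolding paste_def by simp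
  have eT: "elems gs.G = Lf ` elems P \<union> Rt ` (elems Q - {g (ptE 0)})" using gs.G_elems S by simp
  have g0: "ptE 0 \<in> elems (Mp n)" unfolding Mp_elems by auto
  have gS: "z \<in> elems (Mp n) \<Longrightarrow> g z \<in> ?S \<longleftrightarrow> z = ptE 0" for z
    using S iso_inj[OF g _ g0] by auto
  have inj1: "inj_on ?h (elems (Mp (m + n)))"
  proof (rule inj_onI)
    fix x y assume x: "x \<in> elems (Mp (m + n))" and y: "y \<in> elems (Mp (m + n))" and e: "?h x = ?h y"
    show "x = y"
    proof (cases "x \<in> elems (Mp m)"; cases "y \<in> elems (Mp m)")
      assume "x \<in> elems (Mp m)" "y \<in> elems (Mp m)"
      then show ?thesis using e iso_inj[OF f] unfolding pj_def by auto
    next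
      assume a: "x \<notin> elems (Mp m)" "y \<notin> elems (Mp m)"
      then have "g (sh m x) = g (sh m y)" using e unfolding pj_def by auto
      moreover have "sh m x \<in> elems (Mp n)" "sh m y \<in> elems (Mp n)" using sh_maps x y a by auto
      ultimately have "sh m x = sh m y" using iso_inj[OF g] by blast
      then show ?thesis using sh_inj[of m n] x y a unfolding inj_on_def by blast
    qed (use e in \<open>auto simp: pj_def\<close>)
  qed
  have img: "?h ` elems (Mp (m + n)) = elems gs.G"
  proof -
    have "elems (Mp (m + n)) = elems (Mp m) \<union> (elems (Mp (m + n)) - elems (Mp m))" using Mp_mono by blast
    then have "?h ` elems (Mp (m + n)) = ?h ` elems (Mp m) \<union> ?h ` (elems (Mp (m + n)) - elems (Mp m))" by (metis image_Un)
    also have "?h ` elems (Mp m) = Lf ` elems P"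
    proof -
      have "?h ` elems (Mp m) = (\<lambda>x. Lf (f x)) ` elems (Mp m)"
        by (rule image_cong) (simp_all add: pj_def)
      then show ?thesis unfolding eP by (simp add: image_image)
    qed
    also have "?h ` (elems (Mp (m + n)) - elems (Mp m)) = Rt ` g ` sh m ` (elems (Mp (m + n)) - elems (Mp m))"
    proof -
      have "?h ` (elems (Mp (m + n)) - elems (Mp m)) = (\<lambda>x. Rt (g (sh m x))) ` (elems (Mp (m + n)) - elems (Mp m))"
        by (rule image_cong) (simp_all add: pj_def)
      then show ?thesis by (simp add: image_image)
    qed
    also have "\<dots> = Rt ` g ` (elems (Mp n) - {ptE 0})" using sh_image by simp
    also have "g ` (elems (Mp n) - {ptE 0}) = elems Q - {g (ptE 0)}"
    proof -
      have "inj_on g (elems (Mp n))" using iso_bij[OF g] bij_betw_def by metis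
      then have "g ` (elems (Mp n) - {ptE 0}) = g ` elems (Mp n) - g ` {ptE 0}"
        by (rule inj_on_image_set_diff) (use g0 in auto)
      then show ?thesis using eQ by simp
    qed
    finally show ?thesis using eT by simp
  qed
  have fc: "?h ` faces (Mp (m + n)) a x = faces gs.G a (?h x)" if x: "x \<in> elems (Mp (m + n))" for a x
  proof (cases "x \<in> elems (Mp m)")
    case True
    have fx: "f x \<in> elems P" using iso_in[OF f True] .
    have "faces gs.G a (?h x) = Lf ` faces P a (f x)" using gs.G_faces_Lf[OF fx] True unfolding pj_def by simp
    also have "\<dots> = Lf ` f ` faces (Mp m) a x" using iso_faces[OF f True] by simp
    also have "\<dots> = ?h ` faces (Mp m) a x"
    proof -
      have "faces (Mp m) a x \<subseteq> elems (Mp m)" using basic_faces[OF Mp_basic] .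
      then show ?thesis unfolding pj_def by (auto simp: image_image)
    qed
    finally show ?thesis using Mp_faces_sub[OF True] by simp
  next
    case False
    have sx: "sh m x \<in> elems (Mp n)" "sh m x \<noteq> ptE 0" using sh_maps x False by auto
    have gx: "g (sh m x) \<in> elems Q - ?S" using iso_in[OF g sx(1)] gS sx by auto
    have hx: "?h x = Rt (g (sh m x))" using False unfolding pj_def by simp
    have "faces gs.G a (?h x) = glue_inr ?S phi ` g ` faces (Mp n) a (sh m x)"
      using gs.G_faces_Rt[OF gx] iso_faces[OF g sx(1)] hx by simp
    moreover
    consider j where "x = ptE j" "m < j" "j \<le> m + n" | j where "x = edE j" "m \<le> j" "j < m + n"
      using x False unfolding Mp_elems by auto
    then have "?h ` faces (Mp (m + n)) a x = glue_inr ?S phi ` g ` faces (Mp n) a (sh m x)"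
    proof cases
      case 1 then show ?thesis by simp
    next
      case 2
      define t where "t = (if a then Suc (j - m) else j - m)"
      have t: "(if a then Suc j else j) = t + m" "t \<le> n" using 2 unfolding t_def by auto
      have l: "?h ` faces (Mp (m + n)) a x = {?h (ptE (t + m))}" using 2 t by simp
      have r: "glue_inr ?S phi ` g ` faces (Mp n) a (sh m x) = {glue_inr ?S phi (g (ptE t))}"
        using 2 t_def by auto
      have "?h (ptE (t + m)) = glue_inr ?S phi (g (ptE t))"
      proof (cases "t = 0")
        case True
        then show ?thesis using key S unfolding glue_inr_def pj_pt by simp
      next
        case False
        have "ptE t \<in> elems (Mp n)" using t unfolding Mp_elems by auto
        then have "g (ptE t) \<notin> ?S" using gS False by simp
        then show ?thesis using False unfolding glue_inr_def pj_pt by simp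
      qed
      then show ?thesis using l r by simp
    qed
    ultimately show ?thesis by simp
  qed
  have "iso ?h (Mp (m + n)) gs.G" unfolding iso_def bij_betw_def using inj1 img fc by blast
  then show ?thesis using T by simp
qed


lemma Mp1_elems: "elems (Mp 1) = {ptE 0, ptE 1, edE 0}"
proof -
  have "{..1::nat} = {0, 1}" by auto
  moreover have "{..<1::nat} = {0}" by auto
  ultimately show ?thesis unfolding Mp_elems by auto
qed

lemma no_faces_single:
  assumes "basic P" "rankfn P d" "elems P = {p}"
  shows "faces P a p = {}"
proof (rule ccontr)
  assume "faces P a p \<noteq> {}"
  then obtain z where z: "z \<in> faces P a p" by blast
  then have "z = p" using basic_faces[OF assms(1)] assms(3) by blast
  moreover have "covers P z p" using z unfolding covers_def by (cases a) auto
  ultimately show False using covers_rank[OF assms(1,2)] by fastforce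
qed

lemma single_dim:
  assumes "basic P" "rankfn P d" "elems P = {p}" "ogp_dim P = 0"
  shows "elem_dim P p = 0"
proof -
  obtain x where "x \<in> elems P" "ogp_dim P = int (d x)" using ogp_dim_rank[OF assms(1,2)] assms(3) by blast
  then have "d p = 0" using assms(3,4) by simp
  then show ?thesis using rank_elem_dim[OF assms(1,2)] assms(3) by simp
qed

definition k0 :: "elt \<Rightarrow> elt \<Rightarrow> elt \<Rightarrow> elt" where
  "k0 p q x = (if x = ptE 0 then Lf p else if x = ptE 1 then Rt q else Top)"

lemma arrow_points:
  assumes bP: "basic P" and bQ: "basic Q" and rP: "rankfn P dP" and rQ: "rankfn Q dQ"
    and eP: "elems P = {p}" and eQ: "elems Q = {q}" and dP0: "ogp_dim P = 0" and dQ0: "ogp_dim Q = 0"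
  shows "iso (k0 p q) (Mp 1) (arrow P Q phi)"
proof -
  have fP: "faces P a p = {}" for a using no_faces_single[OF bP rP eP] .
  have fQ: "faces Q a q = {}" for a using no_faces_single[OF bQ rQ eQ] .
  have edp: "elem_dim P p = 0" using single_dim[OF bP rP eP dP0] .
  have edq: "elem_dim Q q = 0" using single_dim[OF bQ rQ eQ dQ0] .
  have bd: "bd_all Q = {}" unfolding bd_all_def bdn_def bdm_def using dQ0 by simp
  have eA: "elems (arrow P Q phi) = {Top, Lf p, Rt q}"
    unfolding arrow_elems bd glue_def using eP eQ by auto
  have FT: "faces (arrow P Q phi) False Top = {Lf p}"
    unfolding arrow_faces_Top_F using eP edp dP0 by auto
  have TT: "faces (arrow P Q phi) True Top = {Rt q}"
    unfolding arrow_faces_Top_T bd using eQ edq dQ0 by (auto simp: glue_inr_def)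
  have FL: "faces (arrow P Q phi) a (Lf p) = {}" for a
    using arrow_faces_other[of "Lf p" P Q phi a] fP eP unfolding glue_def glue_faces_def by simp
  have FR: "faces (arrow P Q phi) a (Rt q) = {}" for a
    using arrow_faces_other[of "Rt q" P Q phi a] fQ eQ bd unfolding glue_def glue_faces_def by simp
  have ne: "ptE 0 \<noteq> ptE 1" by simp
  have bij: "bij_betw (k0 p q) (elems (Mp 1)) (elems (arrow P Q phi))"
  proof -
    have k1: "k0 p q (ptE 0) = Lf p" "k0 p q (ptE 1) = Rt q" "k0 p q (edE 0) = Top" "k0 p q (ptE (Suc 0)) = Rt q" unfolding k0_def by simp_all
    have "inj_on (k0 p q) {ptE 0, ptE 1, edE 0}" by (simp add: k1)
    moreover have "k0 p q ` {ptE 0, ptE 1, edE 0} = {Top, Lf p, Rt q}" by (simp add: k1 insert_commute)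
    ultimately show ?thesis unfolding bij_betw_def Mp1_elems eA by simp
  qed
  have k1: "k0 p q (ptE 0) = Lf p" "k0 p q (ptE (Suc 0)) = Rt q" "k0 p q (edE 0) = Top" unfolding k0_def by simp_all
  have fc: "k0 p q ` faces (Mp 1) a x = faces (arrow P Q phi) a (k0 p q x)" if "x \<in> elems (Mp 1)" for a x
  proof -
    have "x = ptE 0 \<or> x = ptE (Suc 0) \<or> x = edE 0" using that Mp1_elems by simp
    moreover have "k0 p q ` faces (Mp 1) a (ptE 0) = faces (arrow P Q phi) a (k0 p q (ptE 0))"
      using FL[of a] k1(1) Mp_faces_pt[of 1 a 0] by simp
    moreover have "k0 p q ` faces (Mp 1) a (ptE (Suc 0)) = faces (arrow P Q phi) a (k0 p q (ptE (Suc 0)))"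
      using FR[of a] k1(2) Mp_faces_pt[of 1 a "Suc 0"] by simp
    moreover have "k0 p q ` faces (Mp 1) a (edE 0) = faces (arrow P Q phi) a (k0 p q (edE 0))"
    proof -
      have "faces (Mp 1) a (edE 0) = {ptE (if a then Suc 0 else 0)}" using Mp_faces_ed[of 1 a 0] by simp
      then show ?thesis using FT TT k1 by (cases a) simp_all
    qed
    ultimately show ?thesis by blast
  qed
  show ?thesis unfolding iso_def using bij fc by blast
qed

definition Inv :: "elt ogp \<Rightarrow> bool" where
  "Inv P \<longleftrightarrow> basic P \<and> elems P \<noteq> {} \<and> (\<exists>d. rankfn P d) \<and>
     (ogp_dim P = 0 \<longrightarrow> (\<exists>p. elems P = {p})) \<and>
     (ogp_dim P = 1 \<longrightarrow> (\<exists>n f. 1 \<le> n \<and> iso f (Mp n) P))"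

lemma Inv_dim_nonneg: "Inv P \<Longrightarrow> 0 \<le> ogp_dim P"
  unfolding Inv_def using ogp_dim_rank by fastforce

lemma point_basic: "basic point_ogp" unfolding basic_def point_ogp_def by simp
lemma point_rank: "rankfn point_ogp (\<lambda>_. 0)" unfolding rankfn_def covers_def point_ogp_def by simp

lemma regmolE_Inv: "regmolE P \<Longrightarrow> Inv P"
proof (induction rule: regmolE.induct)
  case point
  have e: "elems point_ogp = {Pt}" unfolding point_ogp_def by simp
  obtain x where "x \<in> elems point_ogp" "ogp_dim point_ogp = int ((\<lambda>_. 0::nat) x)"
    using ogp_dim_rank[OF point_basic point_rank] e by blast
  then have "ogp_dim point_ogp = 0" by simp
  then show ?case unfolding Inv_def using point_basic point_rank e by auto
next
  case (iso P Q f)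
  obtain d where bP: "basic P" and rP: "rankfn P d" and neP: "elems P \<noteq> {}" using iso.IH unfolding Inv_def by blast
  have bQ: "basic Q" using ogpos_basic[OF iso.hyps(2)] .
  have rQ: "rankfn Q (d \<circ> inv_into (elems P) f)" using rank_iso[OF bP rP iso.hyps(3)] .
  have eQ: "elems Q = f ` elems P" using iso_bij[OF iso.hyps(3)] bij_betw_def by metis
  have dim: "ogp_dim Q = ogp_dim P" using ogp_dim_iso[OF bP bQ rP iso.hyps(3)] .
  have c0: "ogp_dim Q = 0 \<longrightarrow> (\<exists>p. elems Q = {p})"
    using iso.IH dim eQ unfolding Inv_def by auto
  have c1: "ogp_dim Q = 1 \<longrightarrow> (\<exists>n g. 1 \<le> n \<and> iso g (Mp n) Q)"
    using iso.IH dim iso_comp[OF _ iso.hyps(3)] unfolding Inv_def by metis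
  show ?case unfolding Inv_def using bQ rQ eQ neP c0 c1 by blast
next
  case (paste P Q k phi)
  obtain dP where bP: "basic P" and rP: "rankfn P dP" and neP: "elems P \<noteq> {}" using paste.IH(1) unfolding Inv_def by blast
  obtain dQ where bQ: "basic Q" and rQ: "rankfn Q dQ" and neQ: "elems Q \<noteq> {}" using paste.IH(2) unfolding Inv_def by blast
  have br: "basic (paste k P Q phi) \<and> (\<exists>d. rankfn (paste k P Q phi) d)"
    using paste_basic_rank[OF bP bQ rP rQ paste.hyps(3)] .
  have dims: "ogp_dim P \<le> ogp_dim (paste k P Q phi)" "ogp_dim Q \<le> ogp_dim (paste k P Q phi)"
    using paste_dims[OF bP bQ rP rQ paste.hyps(3) neP neQ] by auto
  have k: "int k < ogp_dim P" "int k < ogp_dim Q" using paste.hyps(3) unfolding paste_ok_def by auto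
  have c0: "ogp_dim (paste k P Q phi) \<noteq> 0" using dims k by linarith
  have c1: "\<exists>n f. 1 \<le> n \<and> iso f (Mp n) (paste k P Q phi)" if d1: "ogp_dim (paste k P Q phi) = 1"
  proof -
    have "ogp_dim P = 1" "ogp_dim Q = 1" "k = 0" using dims k d1 by linarith+
    then obtain m f n g where mf: "1 \<le> m" "iso f (Mp m) P" and ng: "1 \<le> n" "iso g (Mp n) Q"
      using paste.IH unfolding Inv_def by metis
    have "iso (pj m f g) (Mp (m + n)) (paste 0 P Q phi)"
      using paste_paths[OF bP bQ mf(2) ng(2) mf(1) ng(1)] paste.hyps(3) \<open>k = 0\<close> by simp
    then show ?thesis using \<open>k = 0\<close> mf(1) by (metis le_add1 order_trans)
  qed
  show ?case unfolding Inv_def using br paste_ne[OF neP] c0 c1 by blast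
next
  case (arrow P Q phi)
  obtain dP where bP: "basic P" and rP: "rankfn P dP" and neP: "elems P \<noteq> {}" using arrow.IH(1) unfolding Inv_def by blast
  obtain dQ where bQ: "basic Q" and rQ: "rankfn Q dQ" and neQ: "elems Q \<noteq> {}" using arrow.IH(2) unfolding Inv_def by blast
  have br: "basic (arrow P Q phi) \<and> (\<exists>d. rankfn (arrow P Q phi) d) \<and> ogp_dim (arrow P Q phi) = ogp_dim P + 1"
    using arrow_basic_rank[OF bP bQ rP rQ arrow.hyps(3) neP neQ] .
  have nn: "0 \<le> ogp_dim P" using Inv_dim_nonneg[OF arrow.IH(1)] .
  have eqd: "ogp_dim P = ogp_dim Q" using arrow.hyps(3) unfolding arrow_ok_def by simp
  have c0: "ogp_dim (arrow P Q phi) \<noteq> 0" using br nn by linarith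
  have c1: "\<exists>n f. 1 \<le> n \<and> iso f (Mp n) (arrow P Q phi)" if d1: "ogp_dim (arrow P Q phi) = 1"
  proof -
    have d0: "ogp_dim P = 0" "ogp_dim Q = 0" using br d1 eqd by linarith+
    then obtain p q where "elems P = {p}" "elems Q = {q}" using arrow.IH unfolding Inv_def by metis
    then have "iso (k0 p q) (Mp 1) (arrow P Q phi)" using arrow_points[OF bP bQ rP rQ _ _ d0] by blast
    then show ?thesis by blast
  qed
  show ?case unfolding Inv_def using br arrow_ne c0 c1 by blast
qed


lemma path_bdm:
  assumes "basic Q" "iso g (Mp n) Q" "1 \<le> n"
  shows "bdm Q a 0 (elems Q) = {g (ptE (if a then n else 0))}"
proof -
  have eQ: "elems Q = g ` elems (Mp n)" using iso_bij[OF assms(2)] bij_betw_def by metis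
  show ?thesis
    using iso_bdm[OF Mp_basic assms(1) Mp_rank assms(2) subset_refl, of a 0] Mp_bdm_all[OF assms(3), of a] eQ by simp
qed

lemma path_pt_faces:
  assumes "iso g (Mp n) Q" "j \<le> n"
  shows "faces Q a (g (ptE j)) = {}"
proof -
  have "ptE j \<in> elems (Mp n)" using assms(2) unfolding Mp_elems by auto
  then show ?thesis using iso_faces[OF assms(1)] by (metis Mp_faces_pt image_empty)
qed

lemma path_dim: "basic Q \<Longrightarrow> iso g (Mp n) Q \<Longrightarrow> 1 \<le> n \<Longrightarrow> ogp_dim Q = 1"
  using ogp_dim_iso[OF Mp_basic _ Mp_rank] Mp_dim by metis

lemma paste_ok_paths:
  assumes bP: "basic P" and bQ: "basic Q" and f: "iso f (Mp m) P" and g: "iso g (Mp n) Q"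
    and m: "1 \<le> m" and n: "1 \<le> n"
  shows "paste_ok 0 P Q (\<lambda>_. f (ptE m))"
proof -
  have S: "bdm Q False 0 (elems Q) = {g (ptE 0)}" using path_bdm[OF bQ g n, of False] by simp
  have S': "bdm P True 0 (elems P) = {f (ptE m)}" using path_bdm[OF bP f m, of True] by simp
  have fQ: "faces Q a (g (ptE 0)) = {}" for a using path_pt_faces[OF g] by simp
  have fP: "faces P a (f (ptE m)) = {}" for a using path_pt_faces[OF f] by simp
  have "iso (\<lambda>_. f (ptE m)) (restrict_ogp Q {g (ptE 0)}) (restrict_ogp P {f (ptE m)})"
    unfolding iso_def bij_betw_def restrict_elems restrict_faces using fQ fP by auto
  then show ?thesis unfolding paste_ok_def using S S' path_dim[OF bP f m] path_dim[OF bQ g n] by simp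
qed

lemma regmolE_back: "regmolE X \<Longrightarrow> basic X \<Longrightarrow> iso h (Mp k) X \<Longrightarrow> regmolE (Mp k)"
proof -
  assume "regmolE X" "iso h (Mp k) X"
  then show ?thesis using regmolE.iso[OF _ Mp_ogpos iso_inv[OF Mp_basic]] by blast
qed

lemma point_arrow_ok: "arrow_ok point_ogp point_ogp id"
proof -
  have e: "elems point_ogp = {Pt}" unfolding point_ogp_def by simp
  obtain x where "x \<in> elems point_ogp" "ogp_dim point_ogp = int ((\<lambda>_. 0::nat) x)"
    using ogp_dim_rank[OF point_basic point_rank] e by blast
  then have d: "ogp_dim point_ogp = 0" by simp
  have r: "round point_ogp" unfolding round_def bdn_def bdm_def using d by simp
  show ?thesis unfolding arrow_ok_def using r iso_id by simp
qed

lemma regmolE_Mp1: "regmolE (Mp 1)"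
proof -
  have e: "elems point_ogp = {Pt}" unfolding point_ogp_def by simp
  obtain x where "x \<in> elems point_ogp" "ogp_dim point_ogp = int ((\<lambda>_. 0::nat) x)"
    using ogp_dim_rank[OF point_basic point_rank] e by blast
  then have d: "ogp_dim point_ogp = 0" by simp
  have A: "regmolE (arrow point_ogp point_ogp id)" using regmolE.arrow[OF regmolE.point regmolE.point point_arrow_ok] .
  have b: "basic (arrow point_ogp point_ogp id)"
    using arrow_basic_rank[OF point_basic point_basic point_rank point_rank point_arrow_ok] e by simp
  have "iso (k0 Pt Pt) (Mp 1) (arrow point_ogp point_ogp id)"
    using arrow_points[OF point_basic point_basic point_rank point_rank e e d d] .
  then show ?thesis using regmolE_back[OF A b] by blast
qed

lemma paste_basic: "basic P \<Longrightarrow> basic Q \<Longrightarrow> rankfn P dP \<Longrightarrow> rankfn Q dQ \<Longrightarrow> paste_ok k P Q phi \<Longrightarrow> basic (paste k P Q phi)"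
  using paste_basic_rank by blast

lemma regmolE_Mp: "1 \<le> n \<Longrightarrow> regmolE (Mp n)"
proof (induction n rule: dec_induct)
  case base then show ?case using regmolE_Mp1 by simp
next
  case (step n)
  have ok: "paste_ok 0 (Mp n) (Mp 1) (\<lambda>_. id (ptE n))"
    using paste_ok_paths[OF Mp_basic Mp_basic iso_id iso_id step.hyps(1)] by simp
  have R: "regmolE (paste 0 (Mp n) (Mp 1) (\<lambda>_. id (ptE n)))"
    using regmolE.paste[OF step.IH regmolE_Mp1 ok] .
  have b: "basic (paste 0 (Mp n) (Mp 1) (\<lambda>_. id (ptE n)))"
    using paste_basic[OF Mp_basic Mp_basic Mp_rank Mp_rank ok] .
  have "iso (pj n id id) (Mp (n + 1)) (paste 0 (Mp n) (Mp 1) (\<lambda>_. id (ptE n)))"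
    using paste_paths[OF Mp_basic Mp_basic iso_id iso_id step.hyps(1) _ ok] by simp
  then show ?case using regmolE_back[OF R b] by simp
qed

lemma Mp_bdm_all_F: "1 \<le> m \<Longrightarrow> bdm (Mp m) False 0 (elems (Mp m)) = {ptE 0}"
  using Mp_bdm_all[of m False] by simp

lemma embed_left:
  assumes m: "1 \<le> m"
  shows "\<exists>Y H1 g1. regmolE Y \<and> basic Y \<and> subincE g1 (Mp m) Y \<and> iso H1 (Mp (s + m)) Y \<and>
     (\<forall>j\<le>m. H1 (ptE (s + j)) = g1 (ptE j)) \<and> (\<forall>j<m. H1 (edE (s + j)) = g1 (edE j))"
proof (cases "s = 0")
  case True
  then show ?thesis using subincE.iso[OF regmolE_Mp[OF m] regmolE_Mp[OF m] iso_id] regmolE_Mp[OF m] Mp_basic iso_id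
    by fastforce
next
  case False
  then have s: "1 \<le> s" by simp
  define phi where "phi = (\<lambda>_::elt. id (ptE s))"
  have ok: "paste_ok 0 (Mp s) (Mp m) phi"
    using paste_ok_paths[OF Mp_basic Mp_basic iso_id iso_id s m] unfolding phi_def .
  let ?Y = "paste 0 (Mp s) (Mp m) phi"
  have R: "regmolE ?Y" using regmolE.paste[OF regmolE_Mp[OF s] regmolE_Mp[OF m] ok] .
  have b: "basic ?Y" using paste_basic[OF Mp_basic Mp_basic Mp_rank Mp_rank ok] .
  have sub: "subincE (paste_inr 0 (Mp m) phi) (Mp m) ?Y" using subincE.inr[OF regmolE_Mp[OF s] regmolE_Mp[OF m] ok] .
  have I: "iso (pj s id id) (Mp (s + m)) ?Y" using paste_paths[OF Mp_basic Mp_basic iso_id iso_id s m ok] .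
  have S: "bdm (Mp m) False (int 0) (elems (Mp m)) = {ptE 0}" using Mp_bdm_all_F[OF m] by simp
  have v1: "pj s id id (ptE (s + j)) = paste_inr 0 (Mp m) phi (ptE j)" for j
    unfolding paste_inr_def S glue_inr_def pj_pt phi_def by auto
  have v2: "pj s id id (edE (s + j)) = paste_inr 0 (Mp m) phi (edE j)" for j
    unfolding paste_inr_def S glue_inr_def pj_ed by auto
  show ?thesis using R b sub I v1 v2 by blast
qed

lemma embed_right:
  assumes R: "regmolE Y" and b: "basic Y" and I: "iso H1 (Mp t) Y" and t: "1 \<le> t"
  shows "\<exists>X H g2. regmolE X \<and> subincE g2 Y X \<and> iso H (Mp (t + r)) X \<and> (\<forall>x\<in>elems (Mp t). H x = g2 (H1 x))"
proof (cases "r = 0")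
  case True
  then show ?thesis using subincE.iso[OF R R iso_id] R I by fastforce
next
  case False
  then have r: "1 \<le> r" by simp
  define psi where "psi = (\<lambda>_::elt. H1 (ptE t))"
  have ok: "paste_ok 0 Y (Mp r) psi"
    using paste_ok_paths[OF b Mp_basic I iso_id t r] unfolding psi_def .
  let ?X = "paste 0 Y (Mp r) psi"
  have RX: "regmolE ?X" using regmolE.paste[OF R regmolE_Mp[OF r] ok] .
  have sub: "subincE Lf Y ?X" using subincE.inl[OF R regmolE_Mp[OF r] ok] .
  have IX: "iso (pj t H1 id) (Mp (t + r)) ?X" using paste_paths[OF b Mp_basic I iso_id t r ok] .
  have "\<forall>x\<in>elems (Mp t). pj t H1 id x = Lf (H1 x)" unfolding pj_def by simp
  then show ?thesis using RX sub IX by blast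
qed

lemma embed:
  assumes m: "1 \<le> m"
  shows "\<exists>X H g. regmolE X \<and> subincE g (Mp m) X \<and> iso H (Mp (s + m + r)) X \<and>
     (\<forall>j\<le>m. H (ptE (s + j)) = g (ptE j)) \<and> (\<forall>j<m. H (edE (s + j)) = g (edE j))"
proof -
  obtain Y H1 g1 where Y: "regmolE Y" "basic Y" "subincE g1 (Mp m) Y" "iso H1 (Mp (s + m)) Y"
    "\<forall>j\<le>m. H1 (ptE (s + j)) = g1 (ptE j)" "\<forall>j<m. H1 (edE (s + j)) = g1 (edE j)"
    using embed_left[OF m, of s] by blast
  have t: "1 \<le> s + m" using m by simp
  obtain X H g2 where X: "regmolE X" "subincE g2 Y X" "iso H (Mp (s + m + r)) X"
    "\<forall>x\<in>elems (Mp (s + m)). H x = g2 (H1 x)"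
    using embed_right[OF Y(1,2,4) t, of r] by blast
  have c: "subincE (g2 \<circ> g1) (Mp m) X" using subincE.comp[OF Y(3) X(2)] .
  have p: "H (ptE (s + j)) = (g2 \<circ> g1) (ptE j)" if "j \<le> m" for j
  proof -
    have "ptE (s + j) \<in> elems (Mp (s + m))" using that unfolding Mp_elems by auto
    then show ?thesis using X(4) Y(5) that by simp
  qed
  have e: "H (edE (s + j)) = (g2 \<circ> g1) (edE j)" if "j < m" for j
  proof -
    have "edE (s + j) \<in> elems (Mp (s + m))" using that unfolding Mp_elems by auto
    then show ?thesis using X(4) Y(6) that by simp
  qed
  show ?thesis using X(1,3) c p e by blast
qed


lemma path_cl_bdm:
  assumes bV: "basic V" and a: "iso \<alpha> (Mp m) V" and z: "z \<in> elems (Mp m)"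
  shows "bdm V b 0 (cl V {\<alpha> z}) = \<alpha> ` bdm (Mp m) b 0 (cl (Mp m) {z})"
proof -
  have "cl V {\<alpha> z} = \<alpha> ` cl (Mp m) {z}" using iso_cl[OF Mp_basic bV a, of "{z}"] z by simp
  moreover have "\<alpha> ` bdm (Mp m) b 0 (cl (Mp m) {z}) = bdm V b 0 (\<alpha> ` cl (Mp m) {z})"
    using iso_bdm[OF Mp_basic bV Mp_rank a cl_sub] .
  ultimately show ?thesis by simp
qed

lemma path_edge_bdm:
  assumes bV: "basic V" and a: "iso \<alpha> (Mp m) V" and j: "j < m"
  shows "bdm V b 0 (cl V {\<alpha> (edE j)}) = {\<alpha> (ptE (if b then Suc j else j))}"
proof -
  have "edE j \<in> elems (Mp m)" using j unfolding Mp_elems by auto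
  then show ?thesis using path_cl_bdm[OF bV a] Mp_cl_ed[OF j] Mp_bdm_ed[OF j] by simp
qed

lemma path_pt_bdm:
  assumes bV: "basic V" and a: "iso \<alpha> (Mp m) V" and j: "j \<le> m"
  shows "bdm V b 0 (cl V {\<alpha> (ptE j)}) = {\<alpha> (ptE j)}"
proof -
  have "ptE j \<in> elems (Mp m)" using j unfolding Mp_elems by auto
  then show ?thesis using path_cl_bdm[OF bV a] Mp_cl_pt[OF j] Mp_bdm_pt[OF j] by simp
qed

lemma incl_edge:
  assumes bV: "basic V" and bU: "basic U" and a: "iso \<alpha> (Mp m) V" and bt: "iso \<beta> (Mp n) U"
    and incl: "inclusion i V U" and j: "j < m"
  shows "\<exists>k<n. i (\<alpha> (edE j)) = \<beta> (edE k) \<and> i (\<alpha> (ptE j)) = \<beta> (ptE k) \<and> i (\<alpha> (ptE (Suc j))) = \<beta> (ptE (Suc k))"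
proof -
  have ej: "edE j \<in> elems (Mp m)" using j unfolding Mp_elems by auto
  have x: "\<alpha> (edE j) \<in> elems V" using iso_in[OF a ej] .
  have mp: "is_map i V U" and inj: "inj_on i (elems V)" using incl unfolding inclusion_def by auto
  have ix: "i (\<alpha> (edE j)) \<in> elems U" using mp x unfolding is_map_def by blast
  have eU: "elems U = \<beta> ` elems (Mp n)" using iso_bij[OF bt] bij_betw_def by metis
  obtain y where y: "y \<in> elems (Mp n)" "i (\<alpha> (edE j)) = \<beta> y" using ix eU by blast
  have bd: "i ` bdm V b 0 (cl V {\<alpha> (edE j)}) = bdm U b 0 (cl U {\<beta> y})" for b
    using mp x y(2) unfolding is_map_def by metis
  have L: "i ` bdm V b 0 (cl V {\<alpha> (edE j)}) = {i (\<alpha> (ptE (if b then Suc j else j)))}" for b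
    using path_edge_bdm[OF bV a j] by simp
  have p1: "ptE j \<in> elems (Mp m)" "ptE (Suc j) \<in> elems (Mp m)" using j unfolding Mp_elems by auto
  have ne: "i (\<alpha> (ptE j)) \<noteq> i (\<alpha> (ptE (Suc j)))"
  proof
    assume "i (\<alpha> (ptE j)) = i (\<alpha> (ptE (Suc j)))"
    then have "\<alpha> (ptE j) = \<alpha> (ptE (Suc j))" using inj iso_in[OF a p1(1)] iso_in[OF a p1(2)] unfolding inj_on_def by blast
    then show False using iso_inj[OF a p1] by simp
  qed
  consider k where "y = ptE k" "k \<le> n" | k where "y = edE k" "k < n" using y(1) unfolding Mp_elems by auto
  then show ?thesis
  proof cases
    case 1
    have "bdm U b 0 (cl U {\<beta> y}) = {\<beta> (ptE k)}" for b using path_pt_bdm[OF bU bt 1(2)] 1(1) by simp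
    then have "i (\<alpha> (ptE j)) = \<beta> (ptE k)" "i (\<alpha> (ptE (Suc j))) = \<beta> (ptE k)"
      using bd[of False] bd[of True] L[of False] L[of True] by simp_all
    then show ?thesis using ne by simp
  next
    case 2
    have "bdm U b 0 (cl U {\<beta> y}) = {\<beta> (ptE (if b then Suc k else k))}" for b using path_edge_bdm[OF bU bt 2(2)] 2(1) by simp
    then have "i (\<alpha> (ptE j)) = \<beta> (ptE k)" "i (\<alpha> (ptE (Suc j))) = \<beta> (ptE (Suc k))"
      using bd[of False] bd[of True] L[of False] L[of True] by simp_all
    then show ?thesis using 2 y(2) by blast
  qed
qed

lemma incl_shift:
  assumes bV: "basic V" and bU: "basic U" and a: "iso \<alpha> (Mp m) V" and bt: "iso \<beta> (Mp n) U"
    and incl: "inclusion i V U" and m: "1 \<le> m"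
  shows "\<exists>s. s + m \<le> n \<and> (\<forall>j\<le>m. i (\<alpha> (ptE j)) = \<beta> (ptE (s + j))) \<and> (\<forall>j<m. i (\<alpha> (edE j)) = \<beta> (edE (s + j)))"
proof -
  note E = incl_edge[OF bV bU a bt incl]
  obtain s where s: "s < n" "i (\<alpha> (ptE 0)) = \<beta> (ptE s)" using E[of 0] m by auto
  have binj: "k \<le> n \<Longrightarrow> l \<le> n \<Longrightarrow> \<beta> (ptE k) = \<beta> (ptE l) \<Longrightarrow> k = l" for k l
    using iso_inj[OF bt, of "ptE k" "ptE l"] unfolding Mp_elems by auto
  have P: "j \<le> m \<Longrightarrow> i (\<alpha> (ptE j)) = \<beta> (ptE (s + j)) \<and> s + j \<le> n" for j
  proof (induction j)
    case 0 then show ?case using s by simp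
  next
    case (Suc j)
    then have IH: "i (\<alpha> (ptE j)) = \<beta> (ptE (s + j))" "s + j \<le> n" by auto
    obtain k where k: "k < n" "i (\<alpha> (ptE j)) = \<beta> (ptE k)" "i (\<alpha> (ptE (Suc j))) = \<beta> (ptE (Suc k))"
      using E[of j] Suc.prems by auto
    have "k = s + j" using binj[of k "s + j"] k IH by simp
    then show ?case using k by simp
  qed
  have Ed: "j < m \<Longrightarrow> i (\<alpha> (edE j)) = \<beta> (edE (s + j)) \<and> s + j < n" for j
  proof -
    assume j: "j < m"
    obtain k where k: "k < n" "i (\<alpha> (edE j)) = \<beta> (edE k)" "i (\<alpha> (ptE j)) = \<beta> (ptE k)"
      using E[OF j] by auto
    have "i (\<alpha> (ptE j)) = \<beta> (ptE (s + j))" "s + j \<le> n" using P j by auto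
    then have "k = s + j" using binj[of k "s + j"] k by simp
    then show ?thesis using k by simp
  qed
  have "s + (m - 1) < n" using Ed[of "m - 1"] m by simp
  then have "s + m \<le> n" using m by simp
  then show ?thesis using P Ed by blast
qed

lemma regmol_path:
  fixes V :: "'a ogp"
  assumes "regular_molecule V" "ogp_dim V = 1"
  shows "\<exists>m \<alpha>. 1 \<le> m \<and> iso \<alpha> (Mp m) V"
proof -
  obtain P f where P: "regmolE P" "iso f P V" and o: "ogpos V" using assms(1) unfolding regular_molecule_def by blast
  have I: "Inv P" using regmolE_Inv[OF P(1)] .
  obtain d where bP: "basic P" and rP: "rankfn P d" using I unfolding Inv_def by blast
  have bV: "basic V" using ogpos_basic[OF o] .
  have "ogp_dim P = 1" using ogp_dim_iso[OF bP bV rP P(2)] assms(2) by simp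
  then obtain m g where "1 \<le> m" "iso g (Mp m) P" using I unfolding Inv_def by blast
  then show ?thesis using iso_comp[OF _ P(2)] by blast
qed

theorem proposition4p3:
  fixes i :: "'a \<Rightarrow> 'b" and V :: "'a ogp" and U :: "'b ogp"
  assumes "regular_molecule V" and "regular_molecule U"
    and "ogp_dim V = 1" and "ogp_dim U = 1"
    and "inclusion i V U"
  shows "submolecule_inclusion i V U"
proof -
  obtain m \<alpha> where m: "1 \<le> m" and a: "iso \<alpha> (Mp m) V" using regmol_path[OF assms(1,3)] by blast
  obtain n \<beta> where n: "1 \<le> n" and bt: "iso \<beta> (Mp n) U" using regmol_path[OF assms(2,4)] by blast
  have bV: "basic V" using assms(1) ogpos_basic unfolding regular_molecule_def by blast
  have bU: "basic U" using assms(2) ogpos_basic unfolding regular_molecule_def by blast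
  obtain s where s: "s + m \<le> n" "\<forall>j\<le>m. i (\<alpha> (ptE j)) = \<beta> (ptE (s + j))" "\<forall>j<m. i (\<alpha> (edE j)) = \<beta> (edE (s + j))"
    using incl_shift[OF bV bU a bt assms(5) m] by blast
  define r where "r = n - (s + m)"
  have nn: "s + m + r = n" using s(1) unfolding r_def by simp
  obtain X H g where X: "regmolE X" "subincE g (Mp m) X" "iso H (Mp (s + m + r)) X"
    "\<forall>j\<le>m. H (ptE (s + j)) = g (ptE j)" "\<forall>j<m. H (edE (s + j)) = g (edE j)"
    using embed[OF m, of s r] by blast
  define a' where "a' = inv_into (elems (Mp m)) \<alpha>"
  define b' where "b' = H \<circ> inv_into (elems (Mp n)) \<beta>"
  have ia: "iso a' V (Mp m)" unfolding a'_def using iso_inv[OF Mp_basic a] .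
  have ib: "iso b' U X" unfolding b'_def using iso_comp[OF iso_inv[OF Mp_basic bt]] X(3) nn by simp
  have eq: "b' (i x) = g (a' x)" if x: "x \<in> elems V" for x
  proof -
    have z: "a' x \<in> elems (Mp m)" "\<alpha> (a' x) = x" using iso_inv_in[OF a x] iso_inv_right[OF a x] unfolding a'_def by auto
    consider j where "a' x = ptE j" "j \<le> m" | j where "a' x = edE j" "j < m" using z(1) unfolding Mp_elems by auto
    then show ?thesis
    proof cases
      case 1
      have ix: "i x = \<beta> (ptE (s + j))" using s(2) 1 z(2) by metis
      have "ptE (s + j) \<in> elems (Mp n)" using 1 s(1) unfolding Mp_elems by auto
      then have "inv_into (elems (Mp n)) \<beta> (i x) = ptE (s + j)" using iso_inv_left[OF bt] ix by simp
      then show ?thesis unfolding b'_def using X(4) 1 by simp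
    next
      case 2
      have ix: "i x = \<beta> (edE (s + j))" using s(3) 2 z(2) by metis
      have "edE (s + j) \<in> elems (Mp n)" using 2 s(1) unfolding Mp_elems by auto
      then have "inv_into (elems (Mp n)) \<beta> (i x) = edE (s + j)" using iso_inv_left[OF bt] ix by simp
      then show ?thesis unfolding b'_def using X(5) 2 by simp
    qed
  qed
  show ?thesis unfolding submolecule_inclusion_def using assms(5) X(2) ia ib eq by blast
qed


end
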